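(* In the bounded-domain setup, let $D_1=U\times(0,qR^2]$ and let $w\in C^{2,1}_{x,t}(D_1)\cap C(\overline{D_1})$ satisfy $\mathcal Lw\le0$ in $D_1$ and $w\le0$ on $\Gamma\times(0,qR^2)$. Then $$\max\{0,\sup_U w(x,qR^2)\}\le\frac1{1+\eta_0}\max\{0,\sup_U w(x,0)\}.$$
   Context: Setup. Fix $n\ge2$. For $i=1,2$: $g_i(s)=a^{(i)}_0+\sum_{j=1}^{N_i}a^{(i)}_js^{\alpha^{(i)}_j}$ ($s\ge0$), $a^{(i)}_0>0$, $a^{(i)}_j\ge0$, real $0<\alpha^{(i)}_1<\dots$; $G_i(u)=g_i(|u|)u$ ($u\in\mathbb R$). $f_1,f_2\in C([0,1])\cap C^1((0,1))$, $f_1(0)=0=f_2(1)$, $f_1'>0>f_2'$ on $(0,1)$; $p_c'\in C^1((0,1))$, $p_c'>0$; $F_i=1/(p_c'f_i)$. Fix $r_0>0$, $c_1,c_2$ with $c_1^2+c_2^2>0$, $s_0\in(0,1)$, and let $\hat S$ be the $C^1$ solution of $\hat S'=G_2(c_2r^{1-n})F_2(\hat S)-G_1(c_1r^{1-n})F_1(\hat S)$, $\hat S(r_0)=s_0$, $0<\hat S<1$, on its maximal interval $[r_0,R_{\max})$. For $r_0\le|x|<R_{\max}$: $S_*(x)=\hat S(|x|)$, $u_i^*(x)=c_i|x|^{-n}x$. For $u\in\mathbb R^n$: $\mathbf G_i(u)=g_i(|u|)u$, Jacobian $\mathbf G_i'(u)=g_i(|u|)I_n+g_i'(|u|)uu^T/|u|$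 ($=g_i(0)I_n$ at $u=0$). $B(x)=F_1(S_* )\mathbf G_1'(u_1^* )+F_2(S_* )\mathbf G_2'(u_2^* )$ (symmetric positive definite), $A=B^{-1}$, $b(x)=F_2'(S_* )\mathbf G_2(u_2^* )-F_1'(S_* )\mathbf G_1(u_1^* )$. Operator $\mathcal Lw=\partial_tw-\nabla\cdot(A\nabla w)-b\cdot(A\nabla w)$. $C^{2,1}_{x,t}$: continuous with continuous $x$-derivatives up to order 2 and $t$-derivative of order 1. Bounded-domain setup: fix $R\in(r_0,R_{\max})$ with $0<\underline s\le\hat S(r)\le\bar s<1$ on $[r_0,R]$; $U$ open bounded, $U\subset B_R\setminus\overline{B_{r_0}}$, $\Gamma=\partial U$. Constants: $d_0=\min\{g_1(0),g_2(0)\}$, $d_1=\sum_i g_i(|c_i|r_0^{1-n})$, $d_2=\sum_i g_i(|c_i|r_0^{1-n})|c_i|r_0^{1-n}$, $d_3=\sum_i g_i'(|c_i|r_0^{1-n})|c_i|r_0^{1-n}$ (terms with $c_i=0$ read as $0$), $d_4=d_1+d_3$; $\mu_1=\sum_i\max_{[\underline s,\bar s]}F_i$, $\mu_2=\sum_i\min_{[\underline s,\bar s]}F_i$, $\mu_3=\sum_i\max_{[\underline s,\bar s]}|F_i'|$; $C_0=d_4\mu_1$, $C_1=d_0\mu_2$, $C_2=d_2\mu_3$; $\kappa_0=C_0/(2C_1)$, $s_R=\kappa_0(n+C_2R)$, $q=\kappa_0C_0/(2s_R)$, $\eta_0=(r_0/R)^{2s_R}$. *)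

theory Defs
  imports "HOL-Analysis.Analysis"
begin

definition gpoly :: "(nat \<Rightarrow> real) \<Rightarrow> (nat \<Rightarrow> real) \<Rightarrow> nat \<Rightarrow> real \<Rightarrow> real" where
  "gpoly a al N s = a 0 + (\<Sum>j=1..N. a j * s powr al j)"

definition gpoly_deriv :: "(nat \<Rightarrow> real) \<Rightarrow> (nat \<Rightarrow> real) \<Rightarrow> nat \<Rightarrow> real \<Rightarrow> real" where
  "gpoly_deriv a al N s = (\<Sum>j=1..N. a j * al j * s powr (al j - 1))"

definition gpoly_admissible :: "(nat \<Rightarrow> real) \<Rightarrow> (nat \<Rightarrow> real) \<Rightarrow> nat \<Rightarrow> bool" where
  "gpoly_admissible a al N \<longleftrightarrow> a 0 > 0 \<and> (\<forall>j\<in>{1..N}. a j \<ge> 0)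
     \<and> (N \<ge> 1 \<longrightarrow> 0 < al 1) \<and> (\<forall>j\<in>{1..<N}. al j < al (Suc j))"

definition Gs :: "(real \<Rightarrow> real) \<Rightarrow> real \<Rightarrow> real" where
  "Gs g u = g \<bar>u\<bar> * u"

definition Gvec :: "(real \<Rightarrow> real) \<Rightarrow> real^'n \<Rightarrow> real^'n" where
  "Gvec g u = g (norm u) *\<^sub>R u"

definition outer :: "real^'n \<Rightarrow> real^'n \<Rightarrow> real^'n^'n" where
  "outer u v = (\<chi> i j. u $ i * v $ j)"

definition Gjac :: "(real \<Rightarrow> real) \<Rightarrow> (real \<Rightarrow> real) \<Rightarrow> real^'n \<Rightarrow> real^'n^'n" where
  "Gjac g g' u = (if u = 0 then g 0 *\<^sub>R mat 1
                  else g (norm u) *\<^sub>R mat 1 + (g' (norm u) / norm u) *\<^sub>R outer u u)"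

definition Ffun :: "(real \<Rightarrow> real) \<Rightarrow> (real \<Rightarrow> real) \<Rightarrow> real \<Rightarrow> real" where
  "Ffun pc' f s = 1 / (pc' s * f s)"

definition ustar :: "real \<Rightarrow> real^'n \<Rightarrow> real^'n" where
  "ustar c x = (c / norm x ^ CARD('n)) *\<^sub>R x"

definition gradx :: "(real^'n \<Rightarrow> real \<Rightarrow> real) \<Rightarrow> real^'n \<Rightarrow> real \<Rightarrow> real^'n" where
  "gradx w x t = (\<chi> i. frechet_derivative (\<lambda>y. w y t) (at x) (axis i 1))"

definition hessx :: "(real^'n \<Rightarrow> real \<Rightarrow> real) \<Rightarrow> real^'n \<Rightarrow> real \<Rightarrow> real^'n^'n" where
  "hessx w x t = (\<chi> i j. frechet_derivative (\<lambda>y. gradx w y t $ i) (at x) (axis j 1))"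

definition dtime :: "(real^'n \<Rightarrow> real \<Rightarrow> real) \<Rightarrow> real set \<Rightarrow> real^'n \<Rightarrow> real \<Rightarrow> real" where
  "dtime w I x t = vector_derivative (\<lambda>s. w x s) (at t within I)"

definition divg :: "(real^'n \<Rightarrow> real^'n) \<Rightarrow> real^'n \<Rightarrow> real" where
  "divg V x = (\<Sum>i\<in>UNIV. frechet_derivative V (at x) (axis i 1) $ i)"

definition C21 :: "(real^'n \<Rightarrow> real \<Rightarrow> real) \<Rightarrow> (real^'n) set \<Rightarrow> real \<Rightarrow> bool" where
  "C21 w U T \<longleftrightarrow>
     (\<forall>x\<in>U. \<forall>t\<in>{0<..T}. (\<lambda>y. w y t) differentiable (at x)
         \<and> (\<lambda>y. gradx w y t) differentiable (at x)
         \<and> (\<lambda>s. w x s) differentiable (at t within {0<..T}))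
   \<and> continuous_on (U \<times> {0<..T}) (\<lambda>(x,t). w x t)
   \<and> continuous_on (U \<times> {0<..T}) (\<lambda>(x,t). gradx w x t)
   \<and> continuous_on (U \<times> {0<..T}) (\<lambda>(x,t). hessx w x t)
   \<and> continuous_on (U \<times> {0<..T}) (\<lambda>(x,t). dtime w {0<..T} x t)"

definition Lop :: "(real^'n \<Rightarrow> real^'n^'n) \<Rightarrow> (real^'n \<Rightarrow> real^'n) \<Rightarrow> real \<Rightarrow>
                   (real^'n \<Rightarrow> real \<Rightarrow> real) \<Rightarrow> real^'n \<Rightarrow> real \<Rightarrow> real" where
  "Lop A b T w x t = dtime w {0<..T} x t
      - divg (\<lambda>y. A y *v gradx w y t) x - b x \<bullet> (A x *v gradx w x t)"

end

theory Submission
  imports Defs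
begin


lemma lin_real_cart:
  fixes D :: "real^'n \<Rightarrow> real"
  assumes "linear D"
  shows "D h = (\<chi> i. D (axis i 1)) \<bullet> h"
proof -
  have "D h = D (\<Sum>i\<in>UNIV. h$i *\<^sub>R axis i 1)"
    using basis_expansion[of h] by (simp add: scalar_mult_eq_scaleR)
  also have "\<dots> = (\<Sum>i\<in>UNIV. h$i * D (axis i 1))"
    using assms by (simp add: linear_sum linear_scale)
  also have "\<dots> = (\<chi> i. D (axis i 1)) \<bullet> h"
    by (simp add: inner_vec_def mult.commute)
  finally show ?thesis .
qed

lemma gradx_works:
  assumes "(\<lambda>y. w y t) differentiable (at x)"
  shows "((\<lambda>y. w y t) has_derivative (\<lambda>h. gradx w x t \<bullet> h)) (at x)"
proof -
  have d: "((\<lambda>y. w y t) has_derivative frechet_derivative (\<lambda>y. w y t) (at x)) (at x)"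
    using assms frechet_derivative_works by blast
  have "linear (frechet_derivative (\<lambda>y. w y t) (at x))"
    using d has_derivative_linear by blast
  then have "frechet_derivative (\<lambda>y. w y t) (at x) = (\<lambda>h. gradx w x t \<bullet> h)"
    unfolding gradx_def by (intro ext lin_real_cart)
  then show ?thesis using d by simp
qed

lemma hess_nonpos:
  fixes Z :: "real^'n \<Rightarrow> real"
  assumes U: "open U" "x \<in> U" and mx: "\<forall>y\<in>U. Z y \<le> Z x"
    and dZ: "\<forall>y\<in>U. (Z has_derivative (\<lambda>h. Gz y \<bullet> h)) (at y)"
    and dG: "(Gz has_derivative f) (at x)" and G0: "Gz x = 0"
  shows "e \<bullet> f e \<le> 0"
proof (rule ccontr)
  assume "\<not> e \<bullet> f e \<le> 0"
  then have c: "f e \<bullet> e > 0" by (simp add: inner_commute)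
  obtain r where r: "r > 0" "ball x r \<subseteq> U" using U open_contains_ball by blast
  define d where "d = r / (norm e + 1)"
  have ne: "norm e + 1 > 0" using norm_ge_zero[of e] by linarith
  have d0: "d > 0" using r ne by (simp add: d_def)
  have inU: "x + s *\<^sub>R e \<in> U" if "\<bar>s\<bar> \<le> d" for s
  proof -
    have "norm (s *\<^sub>R e) = \<bar>s\<bar> * norm e" by simp
    also have "\<dots> \<le> d * norm e" using that by (simp add: mult_right_mono)
    also have "\<dots> < r" using r ne unfolding d_def by (simp add: field_simps)
    finally show ?thesis using r(2) by (auto simp: dist_norm)
  qed
  have lin: "((\<lambda>s::real. x + s *\<^sub>R e) has_derivative (\<lambda>s. s *\<^sub>R e)) (at s)" for s
    by (auto intro!: derivative_eq_intros)
  have dphi: "((\<lambda>s. Z (x + s *\<^sub>R e)) has_real_derivative (Gz (x + s *\<^sub>R e) \<bullet> e)) (at s)"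
    if "\<bar>s\<bar> \<le> d" for s
  proof -
    have "((Z \<circ> (\<lambda>s::real. x + s *\<^sub>R e)) has_derivative ((\<lambda>h. Gz (x + s *\<^sub>R e) \<bullet> h) \<circ> (\<lambda>s. s *\<^sub>R e))) (at s)"
      using diff_chain_at[OF lin, of Z "\<lambda>h. Gz (x + s *\<^sub>R e) \<bullet> h" s] dZ inU[OF that] by blast
    then show ?thesis
      by (simp add: has_real_derivative_iff_has_vector_derivative has_vector_derivative_def o_def algebra_simps)
  qed
  have dpsi: "((\<lambda>s. Gz (x + s *\<^sub>R e) \<bullet> e) has_real_derivative (f e \<bullet> e)) (at 0)"
  proof -
    have "((Gz \<circ> (\<lambda>s::real. x + s *\<^sub>R e)) has_derivative (f \<circ> (\<lambda>s. s *\<^sub>R e))) (at 0)"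
      using diff_chain_at[OF lin, of Gz f 0] dG by simp
    then have "((\<lambda>s. (Gz \<circ> (\<lambda>s::real. x + s *\<^sub>R e)) s \<bullet> e) has_derivative (\<lambda>s. (f \<circ> (\<lambda>s. s *\<^sub>R e)) s \<bullet> e)) (at 0)"
      by (rule bounded_linear.has_derivative[OF bounded_linear_inner_left])
    moreover have "linear f" using dG has_derivative_linear by blast
    ultimately show ?thesis
      by (simp add: has_real_derivative_iff_has_vector_derivative has_vector_derivative_def o_def linear_scale algebra_simps)
  qed
  obtain d2 where d2: "d2 > 0" "\<forall>h>0. h < d2 \<longrightarrow> Gz (x + 0 *\<^sub>R e) \<bullet> e < Gz (x + (0 + h) *\<^sub>R e) \<bullet> e"
    using DERIV_pos_inc_right[OF dpsi c] by blast
  define s1 where "s1 = min d (d2 / 2)"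
  have s1: "s1 > 0" "s1 \<le> d" "s1 < d2" using d0 d2 by (auto simp: s1_def)
  obtain z where z: "z > 0" "z < s1" "Z (x + s1 *\<^sub>R e) - Z (x + 0 *\<^sub>R e) = (s1 - 0) * (Gz (x + z *\<^sub>R e) \<bullet> e)"
    using MVT2[of 0 s1 "\<lambda>s. Z (x + s *\<^sub>R e)" "\<lambda>s. Gz (x + s *\<^sub>R e) \<bullet> e"] s1 dphi by auto
  have "Gz (x + z *\<^sub>R e) \<bullet> e > 0" using d2(2)[rule_format, of z] z s1 G0 by simp
  then have "s1 * (Gz (x + z *\<^sub>R e) \<bullet> e) > 0" using s1 by simp
  then have "Z (x + s1 *\<^sub>R e) > Z x" using z s1 by simp
  moreover have "Z (x + s1 *\<^sub>R e) \<le> Z x" using mx inU[of s1] s1 by auto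
  ultimately show False by simp
qed
lemma norm_mv_le: "norm ((M::real^'m^'k) *v u) \<le> (\<Sum>i\<in>UNIV. \<Sum>j\<in>UNIV. \<bar>M $ i $ j\<bar>) * norm u"
  using onorm[OF matrix_vector_mul_bounded_linear, of M u] onorm_le_matrix_component_sum[of M]
  by (meson mult_right_mono norm_ge_zero order_trans)

lemma contprod:
  fixes A :: "real^'n \<Rightarrow> real^'m^'k" and g :: "real^'n \<Rightarrow> real^'m"
  assumes Ac: "continuous (at x) A" and gd: "(g has_derivative g') (at x)" and g0: "g x = 0"
  shows "((\<lambda>y. A y *v g y) has_derivative (\<lambda>e. A x *v g' e)) (at x)"
proof -
  have bl: "bounded_linear g'" using gd has_derivative_bounded_linear by blast
  then obtain K where K: "K > 0" "\<And>h. norm (g' h) \<le> norm h * K"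
    using bounded_linear.pos_bounded by blast
  have bl2: "bounded_linear (\<lambda>e. A x *v g' e)"
    using bl by (rule bounded_linear_compose[OF matrix_vector_mul_bounded_linear])
  define Sx where "Sx = (\<Sum>i\<in>UNIV. \<Sum>j\<in>UNIV. \<bar>A x $ i $ j\<bar>)"
  have Sx0: "Sx \<ge> 0" unfolding Sx_def by (intro sum_nonneg) auto
  have S: "((\<lambda>y. \<Sum>i\<in>UNIV. \<Sum>j\<in>UNIV. \<bar>(A y - A x) $ i $ j\<bar>) \<longlongrightarrow> 0) (at x)"
  proof -
    have "((\<lambda>y. \<Sum>i\<in>UNIV. \<Sum>j\<in>UNIV. \<bar>(A y - A x) $ i $ j\<bar>) \<longlongrightarrow> (\<Sum>i\<in>UNIV. \<Sum>j\<in>UNIV. \<bar>(A x - A x) $ i $ j\<bar>)) (at x)"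
      using Ac unfolding continuous_at
      by (intro tendsto_intros)
    then show ?thesis by simp
  qed
  have gd2: "\<forall>e>0. eventually (\<lambda>y. norm (g y - g x - g' (y - x)) \<le> e * norm (y - x)) (at x)"
    using gd unfolding has_derivative_within_alt2 by (rule conjunct2)
  show ?thesis
    unfolding has_derivative_within_alt2
  proof (rule conjI[OF bl2], intro allI impI)
    fix e :: real assume e: "e > 0"
    have e1: "e / (2 * (Sx + 1)) > 0" using e Sx0 by simp
    have ev0: "eventually (\<lambda>y. norm (g y - g x - g' (y - x)) \<le> 1 * norm (y - x)) (at x)"
      using gd2[rule_format, of 1] by simp
    have ev1: "eventually (\<lambda>y. norm (g y - g x - g' (y - x)) \<le> (e / (2 * (Sx + 1))) * norm (y - x)) (at x)"
      using gd2[rule_format, OF e1] .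
    have ev2: "eventually (\<lambda>y. (\<Sum>i\<in>UNIV. \<Sum>j\<in>UNIV. \<bar>(A y - A x) $ i $ j\<bar>) < e / (2 * (K + 1))) (at x)"
      using S e K by (intro order_tendstoD(2)) auto
    show "eventually (\<lambda>y. norm (A y *v g y - A x *v g x - A x *v g' (y - x)) \<le> e * norm (y - x)) (at x)"
      using ev0 ev1 ev2
    proof eventually_elim
      case (elim y)
      define Sy where "Sy = (\<Sum>i\<in>UNIV. \<Sum>j\<in>UNIV. \<bar>(A y - A x) $ i $ j\<bar>)"
      have Sy0: "Sy \<ge> 0" unfolding Sy_def by (intro sum_nonneg) auto
      have gy: "norm (g y) \<le> (K + 1) * norm (y - x)"
      proof -
        have "norm (g y) \<le> norm (g y - g x - g' (y - x)) + norm (g' (y - x))"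
          using g0 norm_triangle_ineq[of "g y - g x - g' (y - x)" "g' (y - x)"] by simp
        also have "\<dots> \<le> norm (y - x) + norm (y - x) * K" using elim(1) K(2)[of "y-x"] by simp
        finally show ?thesis by (simp add: algebra_simps)
      qed
      have "A y *v g y - A x *v g x - A x *v g' (y - x) = (A y - A x) *v g y + A x *v (g y - g x - g' (y - x))"
        using g0 by (simp add: matrix_vector_mult_diff_rdistrib matrix_vector_mult_diff_distrib)
      then have "norm (A y *v g y - A x *v g x - A x *v g' (y - x)) \<le> norm ((A y - A x) *v g y) + norm (A x *v (g y - g x - g' (y - x)))"
        by (simp only: norm_triangle_ineq)
      also have "\<dots> \<le> Sy * ((K + 1) * norm (y - x)) + Sx * ((e / (2 * (Sx + 1))) * norm (y - x))"
      proof (rule add_mono)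
        show "norm ((A y - A x) *v g y) \<le> Sy * ((K + 1) * norm (y - x))"
          using norm_mv_le[of "A y - A x" "g y"] mult_left_mono[OF gy Sy0] unfolding Sy_def by linarith
        show "norm (A x *v (g y - g x - g' (y - x))) \<le> Sx * ((e / (2 * (Sx + 1))) * norm (y - x))"
          using norm_mv_le[of "A x" "g y - g x - g' (y - x)"] mult_left_mono[OF elim(2) Sx0] unfolding Sx_def by linarith
      qed
      also have "\<dots> \<le> (e / (2 * (K + 1))) * ((K + 1) * norm (y - x)) + (Sx + 1) * ((e / (2 * (Sx + 1))) * norm (y - x))"
        using elim(3) Sy_def K e Sx0 by (intro add_mono mult_right_mono) auto
      also have "\<dots> = e * norm (y - x)"
      proof -
        have "(e / (2 * (K + 1))) * ((K + 1) * norm (y - x)) = e * norm (y - x) / 2" using K by (simp add: field_simps)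
        moreover have "(Sx + 1) * ((e / (2 * (Sx + 1))) * norm (y - x)) = e * norm (y - x) / 2" using Sx0 by (simp add: field_simps)
        ultimately show ?thesis by (simp only: field_sum_of_halves)
      qed
      finally show ?case .
    qed
  qed
qed
lemma time_nonneg:
  fixes f :: "real \<Rightarrow> real"
  assumes d: "(f has_real_derivative l) (at t within {0<..T})" and t: "0 < t" "t \<le> T"
    and mx: "\<forall>s\<in>{0<..T}. f s \<le> f t"
  shows "l \<ge> 0"
proof (rule ccontr)
  assume "\<not> l \<ge> 0"
  then have "l < 0" by simp
  then obtain d where d: "d > 0" "\<forall>h>0. t - h \<in> {0<..T} \<longrightarrow> h < d \<longrightarrow> f t < f (t - h)"
    using has_real_derivative_neg_dec_left[OF d] by blast
  define h where "h = min d t / 2"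
  have h: "h > 0" "h < d" "t - h \<in> {0<..T}" using d t by (auto simp: h_def)
  then have "f t < f (t - h)" using d by blast
  moreover have "f (t - h) \<le> f t" using mx h by blast
  ultimately show False by simp
qed

lemma maxprin:
  fixes U :: "(real^'n) set" and w v :: "real^'n \<Rightarrow> real \<Rightarrow> real"
    and A :: "real^'n \<Rightarrow> real^'n^'n" and b :: "real^'n \<Rightarrow> real^'n"
  assumes U: "open U" "bounded U" and T: "T > 0"
  and cont: "continuous_on (closure U \<times> {0..T}) (\<lambda>(x,t). w x t - v x t)"
  and init: "\<forall>x\<in>closure U. w x 0 \<le> v x 0"
  and bdry: "\<forall>x\<in>frontier U. \<forall>t\<in>{0<..T}. w x t \<le> v x t"
  and dw: "\<forall>x\<in>U. \<forall>t\<in>{0<..T}. (\<lambda>y. w y t) differentiable (at x) \<and> (\<lambda>y. gradx w y t) differentiable (at x)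
            \<and> (\<lambda>s. w x s) differentiable (at t within {0<..T})"
  and dv: "\<forall>x\<in>U. \<forall>t\<in>{0<..T}. (\<lambda>y. v y t) differentiable (at x) \<and> (\<lambda>y. gradx v y t) differentiable (at x)
            \<and> (\<lambda>s. v x s) differentiable (at t within {0<..T})"
  and Ac: "\<forall>x\<in>U. continuous (at x) A"
  and Atr: "\<forall>x\<in>U. \<forall>f. linear f \<longrightarrow> (\<forall>e. e \<bullet> f e \<le> 0) \<longrightarrow> (\<Sum>i\<in>UNIV. (A x *v f (axis i 1)) $ i) \<le> 0"
  and Avd: "\<forall>x\<in>U. \<forall>t\<in>{0<..T}. (\<lambda>y. A y *v gradx v y t) differentiable (at x)"
  and Lw: "\<forall>x\<in>U. \<forall>t\<in>{0<..T}. Lop A b T w x t \<le> 0"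
  and Lv: "\<forall>x\<in>U. \<forall>t\<in>{0<..T}. Lop A b T v x t > 0"
  shows "\<forall>x\<in>closure U. \<forall>t\<in>{0..T}. w x t \<le> v x t"
proof (cases "U = {}")
  case True then show ?thesis by simp
next
  case False
  define K where "K = closure U \<times> {0..T}"
  have Kc: "compact K" unfolding K_def using U by (intro compact_Times) (auto simp: compact_closure)
  have Kne: "K \<noteq> {}" unfolding K_def using False T by auto
  obtain p where pK: "p \<in> K" and pmax: "\<forall>q\<in>K. (\<lambda>(x,t). w x t - v x t) q \<le> (\<lambda>(x,t). w x t - v x t) p"
    using continuous_attains_sup[OF Kc Kne cont[folded K_def]] by blast
  obtain x0 t0 where p: "p = (x0, t0)" by (cases p)
  have mx: "\<forall>x\<in>closure U. \<forall>t\<in>{0..T}. w x t - v x t \<le> w x0 t0 - v x0 t0"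
    using pmax unfolding p K_def by auto
  have x0: "x0 \<in> closure U" and t0: "t0 \<in> {0..T}" using pK unfolding p K_def by auto
  have "w x0 t0 - v x0 t0 \<le> 0"
  proof (cases "t0 = 0")
    case True then show ?thesis using init x0 by simp
  next
    case False
    then have t0': "t0 \<in> {0<..T}" using t0 by auto
    show ?thesis
    proof (cases "x0 \<in> U")
      case False
      then have "x0 \<in> frontier U" using x0 U(1) by (simp add: frontier_def interior_open)
      then show ?thesis using bdry t0' by fastforce
    next
      case True
      show ?thesis
      proof (rule ccontr)
        assume "\<not> ?thesis"
        define x t where "x = x0" and "t = t0"
        have xU: "x \<in> U" and tt: "t \<in> {0<..T}" using True t0' by (auto simp: x_def t_def)
        have mxs: "\<forall>y\<in>U. w y t - v y t \<le> w x t - v x t"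
          using mx tt closure_subset unfolding x_def t_def by fastforce
        have mxt: "\<forall>s\<in>{0<..T}. w x s - v x s \<le> w x t - v x t"
          using mx x0 unfolding x_def t_def by fastforce
        define gw where "gw y = gradx w y t" for y
        define gv where "gv y = gradx v y t" for y
        define Gz where "Gz y = gw y - gv y" for y
        have dZ: "\<forall>y\<in>U. ((\<lambda>y. w y t - v y t) has_derivative (\<lambda>h. Gz y \<bullet> h)) (at y)"
        proof
          fix y assume y: "y \<in> U"
          have "((\<lambda>y. w y t - v y t) has_derivative (\<lambda>h. gw y \<bullet> h - gv y \<bullet> h)) (at y)"
            unfolding gw_def gv_def
            using gradx_works[of w t y] gradx_works[of v t y] dw dv y tt by (intro has_derivative_diff) auto
          then show "((\<lambda>y. w y t - v y t) has_derivative (\<lambda>h. Gz y \<bullet> h)) (at y)"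
            unfolding Gz_def by (simp add: inner_diff_left)
        qed
        have "(\<lambda>h. Gz x \<bullet> h) = (\<lambda>h. 0)"
          using differential_zero_maxmin[OF xU U(1) dZ[rule_format, OF xU]] mxs by blast
        then have "Gz x \<bullet> Gz x = 0" by metis
        then have G0: "Gz x = 0" by simp
        then have gwv: "gw x = gv x" unfolding Gz_def by simp
        define Dw where "Dw = frechet_derivative gw (at x)"
        define Dv where "Dv = frechet_derivative gv (at x)"
        have hw: "(gw has_derivative Dw) (at x)" unfolding Dw_def gw_def
          using dw xU tt frechet_derivative_works by blast
        have hv: "(gv has_derivative Dv) (at x)" unfolding Dv_def gv_def
          using dv xU tt frechet_derivative_works by blast
        define fz where "fz e = Dw e - Dv e" for e
        have hz: "(Gz has_derivative fz) (at x)" unfolding Gz_def fz_def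
          using hw hv by (rule has_derivative_diff)
        have lfz: "linear fz" using hz has_derivative_linear by blast
        have qf: "\<forall>e. e \<bullet> fz e \<le> 0"
          using hess_nonpos[OF U(1) xU mxs dZ hz G0] by blast
        have Sz: "(\<Sum>i\<in>UNIV. (A x *v fz (axis i 1)) $ i) \<le> 0"
          using Atr xU lfz qf by blast
        define Pv where "Pv y = A y *v gv y" for y
        define DP where "DP = frechet_derivative Pv (at x)"
        have hP: "(Pv has_derivative DP) (at x)" unfolding DP_def Pv_def gv_def
          using Avd xU tt frechet_derivative_works by blast
        have h1: "((\<lambda>y. A y *v Gz y) has_derivative (\<lambda>e. A x *v fz e)) (at x)"
          using contprod[OF _ hz G0] Ac xU by blast
        have h2: "((\<lambda>y. A y *v Gz y + Pv y) has_derivative (\<lambda>e. A x *v fz e + DP e)) (at x)"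
          using h1 hP by (rule has_derivative_add)
        have h3: "((\<lambda>y. A y *v gradx w y t) has_derivative (\<lambda>e. A x *v fz e + DP e)) (at x)"
        proof (rule has_derivative_transform_within_open[OF h2 U(1) xU])
          fix y assume "y \<in> U"
          show "A y *v Gz y + Pv y = A y *v gradx w y t"
            unfolding Gz_def Pv_def gw_def gv_def by (simp add: matrix_vector_mult_diff_distrib)
        qed
        have divw: "divg (\<lambda>y. A y *v gradx w y t) x = (\<Sum>i\<in>UNIV. (A x *v fz (axis i 1)) $ i) + divg (\<lambda>y. A y *v gradx v y t) x"
        proof -
          have "frechet_derivative (\<lambda>y. A y *v gradx w y t) (at x) = (\<lambda>e. A x *v fz e + DP e)"
            using h3 frechet_derivative_at by metis
          then show ?thesis unfolding divg_def DP_def Pv_def gv_def by (simp add: sum.distrib)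
        qed
        have bt: "b x \<bullet> (A x *v gradx w x t) = b x \<bullet> (A x *v gradx v x t)"
          using gwv unfolding gw_def gv_def by simp
        define tw where "tw = dtime w {0<..T} x t"
        define tv where "tv = dtime v {0<..T} x t"
        have htw: "((\<lambda>s. w x s) has_real_derivative tw) (at t within {0<..T})"
          unfolding tw_def dtime_def has_real_derivative_iff_has_vector_derivative
          using dw xU tt vector_derivative_works by blast
        have htv: "((\<lambda>s. v x s) has_real_derivative tv) (at t within {0<..T})"
          unfolding tv_def dtime_def has_real_derivative_iff_has_vector_derivative
          using dv xU tt vector_derivative_works by blast
        have "tw - tv \<ge> 0"
          using time_nonneg[OF DERIV_diff[OF htw htv]] tt mxt by auto
        have "Lop A b T w x t = (tw - tv) - (\<Sum>i\<in>UNIV. (A x *v fz (axis i 1)) $ i) + Lop A b T v x t"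
          unfolding Lop_def divw bt tw_def tv_def by simp
        moreover have "Lop A b T v x t > 0" using Lv xU tt by blast
        moreover have "Lop A b T w x t \<le> 0" using Lw xU tt by blast
        ultimately show False using Sz \<open>tw - tv \<ge> 0\<close> by linarith
      qed
    qed
  qed
  then show ?thesis using mx by fastforce
qed



lemma al_pos: assumes "gpoly_admissible a al N" "j \<in> {1..N}" shows "al j > 0"
proof -
  have "\<forall>j. 1 \<le> j \<longrightarrow> j \<le> N \<longrightarrow> al j > 0"
  proof (intro allI)
    fix j show "1 \<le> j \<longrightarrow> j \<le> N \<longrightarrow> al j > 0"
    proof (induction j)
      case 0 then show ?case by simp
    next
      case (Suc k)
      show ?case
      proof (cases "k = 0")
        case True then show ?thesis using assms(1) unfolding gpoly_admissible_def by auto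
      next
        case False
        show ?thesis
        proof (intro impI)
          assume "1 \<le> Suc k" "Suc k \<le> N"
          then have k: "1 \<le> k" "k < N" using False by auto
          then have "al k > 0" using Suc.IH by simp
          moreover have "al k < al (Suc k)" using assms(1) k unfolding gpoly_admissible_def by auto
          ultimately show "al (Suc k) > 0" by simp
        qed
      qed
    qed
  qed
  then show ?thesis using assms(2) by auto
qed

lemma gpoly_ge: assumes "gpoly_admissible a al N" "s \<ge> 0" shows "gpoly a al N s \<ge> a 0"
  using assms unfolding gpoly_def gpoly_admissible_def by (auto intro!: sum_nonneg)

lemma gpoly_pos: assumes "gpoly_admissible a al N" "s \<ge> 0" shows "gpoly a al N s > 0"
  using gpoly_ge[OF assms] assms(1) unfolding gpoly_admissible_def by linarith

lemma gpoly_mono: assumes "gpoly_admissible a al N" "0 \<le> s" "s \<le> s'"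
  shows "gpoly a al N s \<le> gpoly a al N s'"
  unfolding gpoly_def
proof (rule add_left_mono, rule sum_mono)
  fix j assume j: "j \<in> {1..N}"
  have "s powr al j \<le> s' powr al j" using al_pos[OF assms(1) j] assms by (intro powr_mono2) auto
  then show "a j * s powr al j \<le> a j * s' powr al j"
    using assms(1) j unfolding gpoly_admissible_def by (intro mult_left_mono) auto
qed

lemma gderiv_nonneg: assumes "gpoly_admissible a al N" shows "gpoly_deriv a al N s \<ge> 0"
  unfolding gpoly_deriv_def
proof (rule sum_nonneg)
  fix j assume j: "j \<in> {1..N}"
  have "a j \<ge> 0" using assms j unfolding gpoly_admissible_def by auto
  moreover have "al j \<ge> 0" using al_pos[OF assms j] by simp
  ultimately show "a j * al j * s powr (al j - 1) \<ge> 0" by simp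
qed

lemma gderiv_s: assumes "s > 0" shows "gpoly_deriv a al N s * s = (\<Sum>j=1..N. a j * al j * s powr al j)"
  unfolding gpoly_deriv_def sum_distrib_right
proof (rule sum.cong[OF refl])
  fix j
  have "s powr (al j - 1) * s = s powr al j" using assms by (simp add: powr_diff)
  then show "a j * al j * s powr (al j - 1) * s = a j * al j * s powr al j" by (simp add: mult.assoc)
qed

lemma gderiv_s_mono: assumes "gpoly_admissible a al N" "0 < s" "s \<le> s'"
  shows "gpoly_deriv a al N s * s \<le> gpoly_deriv a al N s' * s'"
proof -
  have "(\<Sum>j = 1..N. a j * al j * s powr al j) \<le> (\<Sum>j = 1..N. a j * al j * s' powr al j)"
  proof (rule sum_mono)
    fix j assume j: "j \<in> {1..N}"
    have "s powr al j \<le> s' powr al j" using al_pos[OF assms(1) j] assms by (intro powr_mono2) auto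
    moreover have "a j * al j \<ge> 0" using assms(1) j al_pos[OF assms(1) j] unfolding gpoly_admissible_def by auto
    ultimately show "a j * al j * s powr al j \<le> a j * al j * s' powr al j" by (intro mult_left_mono)
  qed
  then show ?thesis using gderiv_s[OF assms(2)] gderiv_s[of s'] assms by simp
qed

lemma gpoly_cont: assumes "s > 0" shows "isCont (gpoly a al N) s"
  unfolding gpoly_def using assms by (intro continuous_intros) auto

lemma gderiv_cont: assumes "s > 0" shows "isCont (gpoly_deriv a al N) s"
  unfolding gpoly_deriv_def using assms by (intro continuous_intros) auto

lemma gpoly_diff: assumes "s > 0" shows "gpoly a al N differentiable (at s)"
proof -
  have "((\<lambda>s. a 0 + (\<Sum>j=1..N. a j * s powr al j)) has_real_derivative
     (0 + (\<Sum>j=1..N. a j * (al j * s powr (al j - 1))))) (at s)"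
    using assms by (intro DERIV_add DERIV_const DERIV_sum DERIV_cmult has_real_derivative_powr)
  then show ?thesis unfolding gpoly_def[abs_def] real_differentiable_def by blast
qed

lemma gderiv_diff: assumes "s > 0" shows "gpoly_deriv a al N differentiable (at s)"
proof -
  have "((\<lambda>s. (\<Sum>j=1..N. a j * al j * s powr (al j - 1))) has_real_derivative
     ((\<Sum>j=1..N. a j * al j * ((al j - 1) * s powr (al j - 1 - 1))))) (at s)"
    using assms by (intro DERIV_sum DERIV_cmult has_real_derivative_powr)
  then show ?thesis unfolding gpoly_deriv_def[abs_def] real_differentiable_def by blast
qed



lemma Fgen:
  fixes f pc' :: "real \<Rightarrow> real"
  assumes pcd: "\<forall>s\<in>{0<..<1}. pc' differentiable (at s)" and pcdc: "continuous_on {0<..<1} (deriv pc')"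
    and pcpos: "\<forall>s\<in>{0<..<1}. pc' s > 0"
    and fd: "\<forall>s\<in>{0<..<1}. f differentiable (at s)" and fdc: "continuous_on {0<..<1} (deriv f)"
    and fpos: "\<forall>s\<in>{0<..<1}. f s > 0"
    and sl: "0 < sl" "sh < 1" "sl \<le> sh"
  shows "\<forall>s\<in>{0<..<1}. Ffun pc' f s > 0"
    and "\<forall>s\<in>{0<..<1}. Ffun pc' f differentiable (at s)"
    and "\<forall>s\<in>{sl..sh}. Ffun pc' f s \<le> Sup (Ffun pc' f ` {sl..sh})"
    and "\<forall>s\<in>{sl..sh}. Inf (Ffun pc' f ` {sl..sh}) \<le> Ffun pc' f s"
    and "Inf (Ffun pc' f ` {sl..sh}) > 0"
    and "\<forall>s\<in>{sl..sh}. \<bar>deriv (Ffun pc' f) s\<bar> \<le> Sup ((\<lambda>s. \<bar>deriv (Ffun pc' f) s\<bar>) ` {sl..sh})"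
proof -
  define D where "D s = - ((deriv pc' s * f s + pc' s * deriv f s) * inverse ((pc' s * f s)\<^sup>2))" for s
  have FD: "(Ffun pc' f has_real_derivative D s) (at s)" if s: "s \<in> {0<..<1}" for s
  proof -
    have "(pc' has_real_derivative deriv pc' s) (at s)" using pcd s DERIV_deriv_iff_real_differentiable by blast
    moreover have "(f has_real_derivative deriv f s) (at s)" using fd s DERIV_deriv_iff_real_differentiable by blast
    ultimately have "((\<lambda>s. pc' s * f s) has_real_derivative (deriv pc' s * f s + pc' s * deriv f s)) (at s)"
      by (rule DERIV_cong[OF DERIV_mult]) (simp add: algebra_simps)
    moreover have "pc' s * f s \<noteq> 0" using pcpos fpos s by (simp add: less_imp_neq[symmetric])
    ultimately have "((\<lambda>s. inverse (pc' s * f s)) has_real_derivative D s) (at s)"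
      unfolding D_def by (rule DERIV_cong[OF DERIV_inverse_fun]) (simp_all add: power2_eq_square)
    then show ?thesis unfolding Ffun_def[abs_def] by (simp add: inverse_eq_divide)
  qed
  show pos: "\<forall>s\<in>{0<..<1}. Ffun pc' f s > 0" using pcpos fpos by (simp add: Ffun_def)
  show dif: "\<forall>s\<in>{0<..<1}. Ffun pc' f differentiable (at s)"
    using FD real_differentiable_def by blast
  have sub: "{sl..sh} \<subseteq> {0<..<1}" using sl by auto
  have cF: "continuous_on {sl..sh} (Ffun pc' f)"
    using dif sub by (intro continuous_at_imp_continuous_on) (auto intro: differentiable_imp_continuous_within)
  have dD: "deriv (Ffun pc' f) s = D s" if "s \<in> {0<..<1}" for s using FD[OF that] by (rule DERIV_imp_deriv)
  have cD: "continuous_on {0<..<1} D"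
  proof -
    have cp: "continuous_on {0<..<1} pc'" using pcd
      by (intro continuous_at_imp_continuous_on) (auto intro: differentiable_imp_continuous_within)
    have cf: "continuous_on {0<..<1} f" using fd
      by (intro continuous_at_imp_continuous_on) (auto intro: differentiable_imp_continuous_within)
    have "\<forall>s\<in>{0<..<1}. (pc' s * f s)\<^sup>2 \<noteq> 0" using pcpos fpos by (simp add: less_imp_neq[symmetric])
    then show ?thesis unfolding D_def
      by (intro continuous_on_minus continuous_on_mult continuous_on_add continuous_on_inverse continuous_on_power cp cf pcdc fdc) auto
  qed
  have cdF: "continuous_on {sl..sh} (\<lambda>s. \<bar>deriv (Ffun pc' f) s\<bar>)"
  proof -
    have "continuous_on {sl..sh} D" using cD sub by (rule continuous_on_subset)
    then have "continuous_on {sl..sh} (\<lambda>s. \<bar>D s\<bar>)" by (intro continuous_intros)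
    moreover have "\<forall>s\<in>{sl..sh}. \<bar>D s\<bar> = \<bar>deriv (Ffun pc' f) s\<bar>" using dD sub by auto
    ultimately show ?thesis using continuous_on_cong[of "{sl..sh}" "{sl..sh}" "\<lambda>s. \<bar>D s\<bar>" "\<lambda>s. \<bar>deriv (Ffun pc' f) s\<bar>"] by simp
  qed
  have bF: "bounded (Ffun pc' f ` {sl..sh})" using cF by (intro compact_imp_bounded compact_continuous_image) auto
  have bdF: "bounded ((\<lambda>s. \<bar>deriv (Ffun pc' f) s\<bar>) ` {sl..sh})" using cdF by (intro compact_imp_bounded compact_continuous_image) auto
  show "\<forall>s\<in>{sl..sh}. Ffun pc' f s \<le> Sup (Ffun pc' f ` {sl..sh})"
    using bF by (auto intro!: cSup_upper bounded_imp_bdd_above)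
  show "\<forall>s\<in>{sl..sh}. \<bar>deriv (Ffun pc' f) s\<bar> \<le> Sup ((\<lambda>s. \<bar>deriv (Ffun pc' f) s\<bar>) ` {sl..sh})"
    using bdF by (auto intro!: cSup_upper bounded_imp_bdd_above)
  show "\<forall>s\<in>{sl..sh}. Inf (Ffun pc' f ` {sl..sh}) \<le> Ffun pc' f s"
    using bF by (auto intro!: cInf_lower bounded_imp_bdd_below)
  obtain m where m: "m \<in> {sl..sh}" "\<forall>s\<in>{sl..sh}. Ffun pc' f m \<le> Ffun pc' f s"
    using continuous_attains_inf[OF compact_Icc _ cF] sl by auto
  have "Inf (Ffun pc' f ` {sl..sh}) = Ffun pc' f m"
    using m by (intro cInf_eq_minimum) auto
  then show "Inf (Ffun pc' f ` {sl..sh}) > 0" using pos m sub by auto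
qed
lemma outer_mv: "outer y y *v u = (y \<bullet> u) *\<^sub>R (y::real^'n)"
  by (simp add: vec_eq_iff outer_def matrix_vector_mult_def inner_vec_def sum_distrib_left mult.commute mult.left_commute)

lemma smv: "(c *\<^sub>R A) *v x = c *\<^sub>R (A *v (x::real^'n)) " for A :: "real^'n^'m"
  by (simp add: vec_eq_iff matrix_vector_mult_def sum_distrib_left mult.assoc)

lemma mv_formula: "(\<gamma> *\<^sub>R mat 1 + \<eta> *\<^sub>R outer y y) *v u = \<gamma> *\<^sub>R u + (\<eta> * (y \<bullet> u)) *\<^sub>R (y::real^'n)"
  by (simp add: matrix_vector_mult_add_rdistrib outer_mv smv)

lemma inv_formula:
  fixes y :: "real^'n"
  assumes g: "\<gamma> > 0" and e: "\<eta> \<ge> 0"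
  shows "matrix_inv (\<gamma> *\<^sub>R mat 1 + \<eta> *\<^sub>R outer y y) = (1/\<gamma>) *\<^sub>R (mat 1 - (\<eta> / (\<gamma> + \<eta> * (y \<bullet> y))) *\<^sub>R outer y y)"
proof -
  define B where "B = \<gamma> *\<^sub>R mat 1 + \<eta> *\<^sub>R outer y y"
  define k where "k = \<eta> / (\<gamma> + \<eta> * (y \<bullet> y))"
  define M where "M = (1/\<gamma>) *\<^sub>R (mat 1 - k *\<^sub>R outer y y)"
  have den: "\<gamma> + \<eta> * (y \<bullet> y) > 0" using g e by (simp add: add_pos_nonneg)
  have kk: "k * (\<gamma> + \<eta> * (y \<bullet> y)) = \<eta>" unfolding k_def using den by simp
  have Mv: "M *v u = (1/\<gamma>) *\<^sub>R (u - (k * (y \<bullet> u)) *\<^sub>R y)" for u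
    unfolding M_def by (simp add: matrix_vector_mult_diff_rdistrib outer_mv smv)
  have Bv: "B *v u = \<gamma> *\<^sub>R u + (\<eta> * (y \<bullet> u)) *\<^sub>R y" for u unfolding B_def by (rule mv_formula)
  have BM: "B ** M = mat 1"
    unfolding matrix_eq
  proof
    fix u
    have "(B ** M) *v u = B *v (M *v u)" by (simp add: matrix_vector_mul_assoc)
    also have "\<dots> = u + ((\<eta>/\<gamma>) * (y \<bullet> u) - k * (y \<bullet> u) - (\<eta>/\<gamma>) * k * (y \<bullet> u) * (y \<bullet> y)) *\<^sub>R y"
      unfolding Mv Bv using g by (simp add: algebra_simps inner_diff_right)
    also have "(\<eta>/\<gamma>) * (y \<bullet> u) - k * (y \<bullet> u) - (\<eta>/\<gamma>) * k * (y \<bullet> u) * (y \<bullet> y) = ((\<eta> - k * (\<gamma> + \<eta> * (y \<bullet> y))) / \<gamma>) * (y \<bullet> u)"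
      using g by (simp add: field_simps)
    also have "\<dots> = 0" using kk by simp
    finally show "(B ** M) *v u = mat 1 *v u" by simp
  qed
  have MB: "M ** B = mat 1"
    unfolding matrix_eq
  proof
    fix u
    have "(M ** B) *v u = M *v (B *v u)" by (simp add: matrix_vector_mul_assoc)
    also have "\<dots> = u + ((\<eta>/\<gamma>) * (y \<bullet> u) - k * (y \<bullet> u) - (\<eta>/\<gamma>) * k * (y \<bullet> u) * (y \<bullet> y)) *\<^sub>R y"
      unfolding Mv Bv using g by (simp add: algebra_simps inner_add_right)
    also have "(\<eta>/\<gamma>) * (y \<bullet> u) - k * (y \<bullet> u) - (\<eta>/\<gamma>) * k * (y \<bullet> u) * (y \<bullet> y) = ((\<eta> - k * (\<gamma> + \<eta> * (y \<bullet> y))) / \<gamma>) * (y \<bullet> u)"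
      using g by (simp add: field_simps)
    also have "\<dots> = 0" using kk by simp
    finally show "(M ** B) *v u = mat 1 *v u" by simp
  qed
  have ex: "\<exists>A'. B ** A' = mat 1 \<and> A' ** B = mat 1" using BM MB by blast
  define X where "X = matrix_inv B"
  have X: "B ** X = mat 1 \<and> X ** B = mat 1" unfolding X_def matrix_inv_def using someI_ex[OF ex] .
  have "X = X ** (B ** M)" using BM by simp
  also have "\<dots> = (X ** B) ** M" by (simp add: matrix_mul_assoc)
  also have "\<dots> = M" using X by simp
  finally show ?thesis unfolding X_def B_def M_def k_def .
qed
lemma yexp: "(\<Sum>j\<in>UNIV. (y $ j) *\<^sub>R axis j (1::real)) = (y::real^'n)"
  using basis_expansion[of y] by (simp add: scalar_mult_eq_scaleR)

lemma lin_y: fixes y :: "real^'n" assumes "linear f" shows "y \<bullet> f y = (\<Sum>i\<in>UNIV. y $ i * (y \<bullet> f (axis i 1)))"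
proof -
  have "f y = (\<Sum>i\<in>UNIV. (y $ i) *\<^sub>R f (axis i 1))"
    using yexp[of y] assms by (metis (no_types, lifting) linear_scale linear_sum sum.cong)
  then show ?thesis by (simp add: inner_sum_right)
qed

lemma trace_key:
  fixes y :: "real^'n" and f :: "real^'n \<Rightarrow> real^'n"
  assumes lin: "linear f" and qf: "\<forall>e. e \<bullet> f e \<le> 0"
  shows "(y \<bullet> y) * (\<Sum>i\<in>UNIV. axis i 1 \<bullet> f (axis i 1)) - y \<bullet> f y \<le> 0"
proof -
  define e where "e i = (axis i (1::real) :: real^'n)" for i
  define Q where "Q i j = e i \<bullet> f (e j)" for i j
  have fl: "f (a *\<^sub>R u - b *\<^sub>R v) = a *\<^sub>R f u - b *\<^sub>R f v" for a b u v
    using lin by (simp add: linear_diff linear_scale)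
  have q: "(y$i *\<^sub>R e j - y$j *\<^sub>R e i) \<bullet> f (y$i *\<^sub>R e j - y$j *\<^sub>R e i)
     = y$i * y$i * Q j j - y$i * y$j * Q j i - y$i * y$j * Q i j + y$j * y$j * Q i i" for i j
    unfolding fl Q_def by (simp add: inner_diff_left inner_diff_right algebra_simps)
  have "(\<Sum>i\<in>UNIV. \<Sum>j\<in>UNIV. (y$i *\<^sub>R e j - y$j *\<^sub>R e i) \<bullet> f (y$i *\<^sub>R e j - y$j *\<^sub>R e i)) \<le> 0"
    using qf by (intro sum_nonpos) auto
  moreover have "(\<Sum>i\<in>UNIV. \<Sum>j\<in>UNIV. (y$i *\<^sub>R e j - y$j *\<^sub>R e i) \<bullet> f (y$i *\<^sub>R e j - y$j *\<^sub>R e i))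
      = 2 * ((y \<bullet> y) * (\<Sum>i\<in>UNIV. Q i i) - y \<bullet> f y)"
  proof -
    have s1: "(\<Sum>i\<in>UNIV. \<Sum>j\<in>UNIV. y$i * y$i * Q j j) = (y \<bullet> y) * (\<Sum>i\<in>UNIV. Q i i)"
    proof -
      have "(\<Sum>i\<in>UNIV. \<Sum>j\<in>UNIV. y$i * y$i * Q j j) = (\<Sum>i\<in>UNIV. y$i * y$i * (\<Sum>j\<in>UNIV. Q j j))"
        by (simp add: sum_distrib_left)
      also have "\<dots> = (\<Sum>i\<in>UNIV. y$i * y$i) * (\<Sum>j\<in>UNIV. Q j j)" by (simp add: sum_distrib_right)
      finally show ?thesis by (simp add: inner_vec_def)
    qed
    have s4: "(\<Sum>i\<in>UNIV. \<Sum>j\<in>UNIV. y$j * y$j * Q i i) = (y \<bullet> y) * (\<Sum>i\<in>UNIV. Q i i)"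
      using s1 by (subst sum.swap) simp
    have s2: "(\<Sum>i\<in>UNIV. \<Sum>j\<in>UNIV. y$i * y$j * Q j i) = y \<bullet> f y"
    proof -
      have "(\<Sum>i\<in>UNIV. \<Sum>j\<in>UNIV. y$i * y$j * Q j i) = (\<Sum>i\<in>UNIV. y$i * ((\<Sum>j\<in>UNIV. y$j *\<^sub>R e j) \<bullet> f (e i)))"
        unfolding Q_def by (simp add: inner_sum_left sum_distrib_left mult.assoc)
      also have "\<dots> = (\<Sum>i\<in>UNIV. y$i * (y \<bullet> f (e i)))" unfolding e_def yexp ..
      also have "\<dots> = y \<bullet> f y" using lin_y[OF lin, of y] unfolding e_def by simp
      finally show ?thesis .
    qed
    have s3: "(\<Sum>i\<in>UNIV. \<Sum>j\<in>UNIV. y$i * y$j * Q i j) = y \<bullet> f y"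
      using s2 by (subst sum.swap) (simp add: mult.commute)
    show ?thesis unfolding q by (simp add: sum.distrib sum_subtractf s1 s2 s3 s4)
  qed
  ultimately show ?thesis unfolding Q_def e_def by simp
qed

lemma trace_neg:
  fixes y :: "real^'n" and f :: "real^'n \<Rightarrow> real^'n"
  assumes lin: "linear f" and qf: "\<forall>e. e \<bullet> f e \<le> 0" and g: "\<gamma> > 0" and k: "k \<ge> 0" "k * (y \<bullet> y) \<le> 1"
  shows "(\<Sum>i\<in>UNIV. (((1/\<gamma>) *\<^sub>R (mat 1 - k *\<^sub>R outer y y)) *v f (axis i 1)) $ i) \<le> 0"
proof -
  define T where "T = (\<Sum>i\<in>UNIV. axis i 1 \<bullet> f (axis i 1))"
  have T0: "T \<le> 0" unfolding T_def using qf by (intro sum_nonpos) auto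
  have key: "(y \<bullet> y) * T - y \<bullet> f y \<le> 0" unfolding T_def by (rule trace_key[OF lin qf])
  have "(\<Sum>i\<in>UNIV. (((1/\<gamma>) *\<^sub>R (mat 1 - k *\<^sub>R outer y y)) *v f (axis i 1)) $ i)
     = (1/\<gamma>) * (\<Sum>i\<in>UNIV. f (axis i 1) $ i - k * (y$i * (y \<bullet> f (axis i 1))))"
    by (simp add: smv matrix_vector_mult_diff_rdistrib outer_mv sum_distrib_left algebra_simps)
  also have "\<dots> = (1/\<gamma>) * (T - k * (y \<bullet> f y))"
    unfolding T_def lin_y[OF lin, of y] by (simp add: sum_subtractf sum_distrib_left inner_axis')
  also have "\<dots> \<le> 0"
  proof -
    have "T - k * (y \<bullet> f y) = (1 - k * (y \<bullet> y)) * T + k * ((y \<bullet> y) * T - y \<bullet> f y)" by (simp add: algebra_simps)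
    also have "\<dots> \<le> 0" using T0 key k by (intro add_nonpos_nonpos mult_nonneg_nonpos mult_nonneg_nonpos) auto
    finally have "T - k * (y \<bullet> f y) \<le> 0" .
    then show ?thesis using g by (simp add: divide_nonpos_pos)
  qed
  finally show ?thesis .
qed

lemma rho_diff: fixes c k r :: real assumes "r > 0" shows "(\<lambda>r. \<bar>c\<bar> * r powr k) differentiable (at r)"
proof -
  have "((\<lambda>r. \<bar>c\<bar> * r powr k) has_real_derivative (\<bar>c\<bar> * (k * r powr (k - 1)))) (at r)"
    using assms by (intro DERIV_cmult has_real_derivative_powr)
  then show ?thesis unfolding real_differentiable_def by blast
qed

lemma rho_cont: fixes c k r :: real assumes "r > 0" shows "isCont (\<lambda>r. \<bar>c\<bar> * r powr k) r"
  using rho_diff[OF assms] differentiable_imp_continuous_within by blast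

lemma grho_diff: fixes c k r :: real assumes g: "\<forall>s>0. g differentiable (at s)" and r: "r > 0"
  shows "(\<lambda>r. g (\<bar>c\<bar> * r powr k)) differentiable (at r)"
proof (cases "c = 0")
  case True then show ?thesis by simp
next
  case False
  then have "\<bar>c\<bar> * r powr k > 0" using r by simp
  then have "g differentiable (at (\<bar>c\<bar> * r powr k))" using g by blast
  then show ?thesis using differentiable_compose[of g "\<lambda>r. \<bar>c\<bar> * r powr k" r UNIV] rho_diff[OF r] by simp
qed

lemma grho_cont: fixes c k r :: real assumes g: "\<forall>s>0. isCont g s" and r: "r > 0"
  shows "isCont (\<lambda>r. g (\<bar>c\<bar> * r powr k)) r"
proof (cases "c = 0")
  case True then show ?thesis by simp
next
  case False
  then have "\<bar>c\<bar> * r powr k > 0" using r by simp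
  then have "isCont g (\<bar>c\<bar> * r powr k)" using g by blast
  then show ?thesis using isCont_o2[OF rho_cont[OF r]] by blast
qed

lemma cont_on_pos: assumes "\<And>r. r > 0 \<Longrightarrow> isCont f r" "\<forall>r\<in>S. r > (0::real)" shows "continuous_on S f"
  using assms by (intro continuous_at_imp_continuous_on) auto

lemma norm_ustar: fixes y :: "real^'n" assumes "y \<noteq> 0"
  shows "norm (ustar c y) = \<bar>c\<bar> * norm y powr (1 - real CARD('n))"
proof -
  have ny: "norm y > 0" using assms by simp
  have "norm y powr (1 - real CARD('n)) = norm y / norm y ^ CARD('n)"
    using ny by (simp add: powr_diff powr_realpow)
  then show ?thesis unfolding ustar_def using ny by (simp add: abs_mult)
qed

lemma outer_scale: "outer (a *\<^sub>R y) (a *\<^sub>R y) = (a * a) *\<^sub>R outer y (y::real^'n)"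
  by (simp add: vec_eq_iff outer_def algebra_simps)

lemma Gjac_ustar: fixes y :: "real^'n" assumes "y \<noteq> 0"
  shows "Gjac g g' (ustar c y) = g (\<bar>c\<bar> * norm y powr (1 - real CARD('n))) *\<^sub>R mat 1
     + ((if c = 0 then 0 else g' (\<bar>c\<bar> * norm y powr (1 - real CARD('n))) * (\<bar>c\<bar> * norm y powr (1 - real CARD('n)))) / (norm y)\<^sup>2) *\<^sub>R outer y y"
proof (cases "c = 0")
  case True then show ?thesis by (simp add: Gjac_def ustar_def)
next
  case False
  define \<rho> where "\<rho> = \<bar>c\<bar> * norm y powr (1 - real CARD('n))"
  have ny: "norm y > 0" using assms by simp
  have nu: "norm (ustar c y) = \<rho>" unfolding \<rho>_def using norm_ustar[OF assms] .
  have rp: "\<rho> > 0" unfolding \<rho>_def using False ny by simp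
  have u0: "ustar c y \<noteq> 0" using nu rp by auto
  have pw: "norm y powr (1 - real CARD('n)) = norm y / norm y ^ CARD('n)"
    using ny by (simp add: powr_diff powr_realpow)
  have "(g' \<rho> / \<rho>) * ((c / norm y ^ CARD('n)) * (c / norm y ^ CARD('n))) = g' \<rho> * \<rho> / (norm y)\<^sup>2"
  proof -
    have "\<rho> * \<rho> = (c / norm y ^ CARD('n)) * (c / norm y ^ CARD('n)) * (norm y)\<^sup>2"
      unfolding \<rho>_def pw using ny by (simp add: field_simps power2_eq_square abs_mult_self_eq)
    then show ?thesis using rp ny by (simp add: field_simps power2_eq_square)
  qed
  moreover have "Gjac g g' (ustar c y) = g \<rho> *\<^sub>R mat 1 + (g' \<rho> / \<rho>) *\<^sub>R outer (ustar c y) (ustar c y)"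
    unfolding Gjac_def using u0 nu by simp
  moreover have "outer (ustar c y) (ustar c y) = ((c / norm y ^ CARD('n)) * (c / norm y ^ CARD('n))) *\<^sub>R outer y y"
    unfolding ustar_def by (rule outer_scale)
  ultimately show ?thesis using False unfolding \<rho>_def by simp
qed

lemma norm_Gvec: "norm (Gvec g u) = \<bar>g (norm u)\<bar> * norm u"
  by (simp add: Gvec_def)
lemma exp_small: fixes a L del :: real assumes ap: "a > 0" and Lp: "L > 0" and del: "del > 0"
  shows "\<exists>ep1>0. \<forall>ep>0. ep < ep1 \<longrightarrow> L * exp (- (a / ep)) \<le> del"
proof -
  define X where "X = \<bar>ln (L / del)\<bar> + 1"
  have Xp: "X > 0" unfolding X_def by (simp add: add_nonneg_pos)
  define ep1 where "ep1 = a / X"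
  have ep1p: "ep1 > 0" unfolding ep1_def using ap Xp by simp
  have aep1: "a / ep1 = X" unfolding ep1_def using ap Xp by simp
  show ?thesis
  proof (intro exI[of _ ep1] conjI allI impI ep1p)
    fix ep :: real assume ep: "ep > 0" "ep < ep1"
    have "a / ep \<ge> a / ep1" using ep ap by (intro divide_left_mono) auto
    then have "a / ep > ln (L / del)" unfolding aep1 X_def by linarith
    then have "exp (- (a / ep)) < exp (- ln (L / del))" by simp
    also have "exp (- ln (L / del)) = del / L" using Lp del by (simp add: exp_minus)
    finally have ex: "exp (- (a / ep)) < del / L" .
    have "L * exp (- (a / ep)) \<le> L * (del / L)" using ex Lp by (intro mult_left_mono) auto
    also have "\<dots> = del" using Lp by simp
    finally show "L * exp (- (a / ep)) \<le> del" .
  qed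
qed



locale fsetup =
  fixes a1 al1 a2 al2 :: "nat \<Rightarrow> real" and N1 N2 :: nat
    and f1 f2 pc' :: "real \<Rightarrow> real"
    and r0 c1 c2 s0 R sl sh :: real
    and Shat :: "real \<Rightarrow> real"
    and U :: "(real^'n) set"
    and d0 d1 d2 d3 d4 mu1 mu2 mu3 C0 C1 C2 kappa0 sR q eta0 :: real
  assumes dim: "CARD('n) \<ge> 2"
    and g1: "gpoly_admissible a1 al1 N1" and g2: "gpoly_admissible a2 al2 N2"
    and f1c: "continuous_on {0..1} f1" and f2c: "continuous_on {0..1} f2"
    and f1d: "\<forall>s\<in>{0<..<1}. f1 differentiable (at s)" and f1dc: "continuous_on {0<..<1} (deriv f1)"
    and f2d: "\<forall>s\<in>{0<..<1}. f2 differentiable (at s)" and f2dc: "continuous_on {0<..<1} (deriv f2)"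
    and f10: "f1 0 = 0" and f21: "f2 1 = 0"
    and f1mono: "\<forall>s\<in>{0<..<1}. deriv f1 s > 0" and f2mono: "\<forall>s\<in>{0<..<1}. deriv f2 s < 0"
    and pcd: "\<forall>s\<in>{0<..<1}. pc' differentiable (at s)" and pcdc: "continuous_on {0<..<1} (deriv pc')"
    and pcpos: "\<forall>s\<in>{0<..<1}. pc' s > 0"
    and r0pos: "r0 > 0" and R: "r0 < R"
    and Sode: "\<forall>r\<in>{r0..R}. (Shat has_real_derivative
        (Gs (gpoly a2 al2 N2) (c2 * r powr (1 - real CARD('n))) * Ffun pc' f2 (Shat r)
         - Gs (gpoly a1 al1 N1) (c1 * r powr (1 - real CARD('n))) * Ffun pc' f1 (Shat r)))
        (at r within {r0..R})"
    and Sbounds: "0 < sl" "sh < 1" "\<forall>r\<in>{r0..R}. sl \<le> Shat r \<and> Shat r \<le> sh"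
    and Uopen: "open U" and Ubdd: "bounded U" and Usub: "U \<subseteq> ball 0 R - cball 0 r0"
    and d0: "d0 = min (gpoly a1 al1 N1 0) (gpoly a2 al2 N2 0)"
    and d1: "d1 = gpoly a1 al1 N1 (\<bar>c1\<bar> * r0 powr (1 - real CARD('n)))
                + gpoly a2 al2 N2 (\<bar>c2\<bar> * r0 powr (1 - real CARD('n)))"
    and d2: "d2 = gpoly a1 al1 N1 (\<bar>c1\<bar> * r0 powr (1 - real CARD('n))) * (\<bar>c1\<bar> * r0 powr (1 - real CARD('n)))
                + gpoly a2 al2 N2 (\<bar>c2\<bar> * r0 powr (1 - real CARD('n))) * (\<bar>c2\<bar> * r0 powr (1 - real CARD('n)))"
    and d3: "d3 = (if c1 = 0 then 0 else gpoly_deriv a1 al1 N1 (\<bar>c1\<bar> * r0 powr (1 - real CARD('n))) * (\<bar>c1\<bar> * r0 powr (1 - real CARD('n))))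
                + (if c2 = 0 then 0 else gpoly_deriv a2 al2 N2 (\<bar>c2\<bar> * r0 powr (1 - real CARD('n))) * (\<bar>c2\<bar> * r0 powr (1 - real CARD('n))))"
    and d4: "d4 = d1 + d3"
    and mu1: "mu1 = Sup (Ffun pc' f1 ` {sl..sh}) + Sup (Ffun pc' f2 ` {sl..sh})"
    and mu2: "mu2 = Inf (Ffun pc' f1 ` {sl..sh}) + Inf (Ffun pc' f2 ` {sl..sh})"
    and mu3: "mu3 = Sup ((\<lambda>s. \<bar>deriv (Ffun pc' f1) s\<bar>) ` {sl..sh}) + Sup ((\<lambda>s. \<bar>deriv (Ffun pc' f2) s\<bar>) ` {sl..sh})"
    and C0: "C0 = d4 * mu1" and C1: "C1 = d0 * mu2" and C2: "C2 = d2 * mu3"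
    and kappa0: "kappa0 = C0 / (2 * C1)"
    and sR: "sR = kappa0 * (real CARD('n) + C2 * R)"
    and q: "q = kappa0 * C0 / (2 * sR)"
    and eta0: "eta0 = (r0 / R) powr (2 * sR)"
begin

lemma f1pos: "s \<in> {0<..<1} \<Longrightarrow> f1 s > 0"
proof -
  assume s: "s \<in> {0<..<1}"
  have "continuous_on {0..s} f1" using s by (intro continuous_on_subset[OF f1c]) auto
  moreover have "\<forall>x. 0 < x \<and> x < s \<longrightarrow> f1 differentiable (at x)" using f1d s by auto
  ultimately obtain l z where z: "0 < z" "z < s" "DERIV f1 z :> l" "f1 s - f1 0 = (s - 0) * l"
    using MVT[of 0 s f1] s by auto
  have "l = deriv f1 z" using z(3) by (simp add: DERIV_imp_deriv)
  then have "l > 0" using f1mono z s by auto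
  then show ?thesis using z s f10 by simp
qed

lemma f2pos: "s \<in> {0<..<1} \<Longrightarrow> f2 s > 0"
proof -
  assume s: "s \<in> {0<..<1}"
  have "continuous_on {s..1} f2" using s by (intro continuous_on_subset[OF f2c]) auto
  moreover have "\<forall>x. s < x \<and> x < 1 \<longrightarrow> f2 differentiable (at x)" using f2d s by auto
  ultimately obtain l z where z: "s < z" "z < 1" "DERIV f2 z :> l" "f2 1 - f2 s = (1 - s) * l"
    using MVT[of s 1 f2] s by auto
  have "l = deriv f2 z" using z(3) by (simp add: DERIV_imp_deriv)
  then have "l < 0" using f2mono z s by auto
  moreover have "1 - s > 0" using s by simp
  ultimately have "(1 - s) * l < 0" by (simp add: mult_pos_neg)
  then show ?thesis using z s f21 by simp
qed

abbreviation "F1 \<equiv> Ffun pc' f1"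
abbreviation "F2 \<equiv> Ffun pc' f2"
abbreviation "gg1 \<equiv> gpoly a1 al1 N1"
abbreviation "gg2 \<equiv> gpoly a2 al2 N2"
abbreviation "gd1 \<equiv> gpoly_deriv a1 al1 N1"
abbreviation "gd2 \<equiv> gpoly_deriv a2 al2 N2"

definition "rho1 r = \<bar>c1\<bar> * r powr (1 - real CARD('n))"
definition "rho2 r = \<bar>c2\<bar> * r powr (1 - real CARD('n))"
definition "e1 r = (if c1 = 0 then 0 else gd1 (rho1 r) * rho1 r)"
definition "e2 r = (if c2 = 0 then 0 else gd2 (rho2 r) * rho2 r)"
definition "gam r = F1 (Shat r) * gg1 (rho1 r) + F2 (Shat r) * gg2 (rho2 r)"
definition "eps r = F1 (Shat r) * e1 r + F2 (Shat r) * e2 r"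
definition "beta r = gam r + eps r"

lemma sl_sh: "sl \<le> sh" using Sbounds(3) R by fastforce

lemma f1pos': "\<forall>s\<in>{0<..<1}. f1 s > 0" using f1pos by blast
lemma f2pos': "\<forall>s\<in>{0<..<1}. f2 s > 0" using f2pos by blast

lemmas FF1 = Fgen[OF pcd pcdc pcpos f1d f1dc f1pos' Sbounds(1,2) sl_sh]
lemmas FF2 = Fgen[OF pcd pcdc pcpos f2d f2dc f2pos' Sbounds(1,2) sl_sh]

lemma S01: "r \<in> {r0..R} \<Longrightarrow> Shat r \<in> {0<..<1}" using Sbounds by fastforce
lemma Ssl: "r \<in> {r0..R} \<Longrightarrow> Shat r \<in> {sl..sh}" using Sbounds by fastforce

lemma nn2: "real CARD('n) \<ge> 2" using dim by simp

lemma rho1_le: "r0 \<le> r \<Longrightarrow> rho1 r \<le> rho1 r0"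
  unfolding rho1_def using nn2 r0pos by (intro mult_left_mono powr_mono2') auto
lemma rho2_le: "r0 \<le> r \<Longrightarrow> rho2 r \<le> rho2 r0"
  unfolding rho2_def using nn2 r0pos by (intro mult_left_mono powr_mono2') auto
lemma rho1_nn: "rho1 r \<ge> 0" unfolding rho1_def by simp
lemma rho2_nn: "rho2 r \<ge> 0" unfolding rho2_def by simp
lemma rho1_pos: "c1 \<noteq> 0 \<Longrightarrow> r > 0 \<Longrightarrow> rho1 r > 0" unfolding rho1_def by simp
lemma rho2_pos: "c2 \<noteq> 0 \<Longrightarrow> r > 0 \<Longrightarrow> rho2 r > 0" unfolding rho2_def by simp

lemma e1_nn: "e1 r \<ge> 0" unfolding e1_def using gderiv_nonneg[OF g1] rho1_nn by simp
lemma e2_nn: "e2 r \<ge> 0" unfolding e2_def using gderiv_nonneg[OF g2] rho2_nn by simp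
lemma e1_le: "r0 \<le> r \<Longrightarrow> e1 r \<le> e1 r0"
  unfolding e1_def using gderiv_s_mono[OF g1 rho1_pos rho1_le] r0pos by auto
lemma e2_le: "r0 \<le> r \<Longrightarrow> e2 r \<le> e2 r0"
  unfolding e2_def using gderiv_s_mono[OF g2 rho2_pos rho2_le] r0pos by auto

lemma d4_eq: "d4 = (gg1 (rho1 r0) + e1 r0) + (gg2 (rho2 r0) + e2 r0)"
  unfolding d4 d1 d3 rho1_def rho2_def e1_def e2_def by simp

lemma d0_pos: "d0 > 0" unfolding d0 using gpoly_pos[OF g1] gpoly_pos[OF g2] by simp

lemma F1b: "r \<in> {r0..R} \<Longrightarrow> F1 (Shat r) > 0 \<and> F1 (Shat r) \<le> Sup (F1 ` {sl..sh}) \<and> Inf (F1 ` {sl..sh}) \<le> F1 (Shat r)"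
  using FF1 S01 Ssl by blast
lemma F2b: "r \<in> {r0..R} \<Longrightarrow> F2 (Shat r) > 0 \<and> F2 (Shat r) \<le> Sup (F2 ` {sl..sh}) \<and> Inf (F2 ` {sl..sh}) \<le> F2 (Shat r)"
  using FF2 S01 Ssl by blast

lemma gam_ge: assumes r: "r \<in> {r0..R}" shows "gam r \<ge> C1"
proof -
  have "C1 = d0 * Inf (F1 ` {sl..sh}) + d0 * Inf (F2 ` {sl..sh})" unfolding C1 mu2 by (simp add: algebra_simps)
  also have "\<dots> \<le> F1 (Shat r) * gg1 (rho1 r) + F2 (Shat r) * gg2 (rho2 r)"
  proof (rule add_mono)
    have "d0 \<le> gg1 (rho1 r)" unfolding d0 using gpoly_mono[OF g1 _ rho1_nn] by (simp add: min.coboundedI1)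
    then show "d0 * Inf (F1 ` {sl..sh}) \<le> F1 (Shat r) * gg1 (rho1 r)"
      using mult_mono[of "Inf (F1 ` {sl..sh})" "F1 (Shat r)" d0 "gg1 (rho1 r)"] F1b[OF r] FF1(5) d0_pos by (simp add: mult.commute)
    have "d0 \<le> gg2 (rho2 r)" unfolding d0 using gpoly_mono[OF g2 _ rho2_nn] by (simp add: min.coboundedI2)
    then show "d0 * Inf (F2 ` {sl..sh}) \<le> F2 (Shat r) * gg2 (rho2 r)"
      using mult_mono[of "Inf (F2 ` {sl..sh})" "F2 (Shat r)" d0 "gg2 (rho2 r)"] F2b[OF r] FF2(5) d0_pos by (simp add: mult.commute)
  qed
  finally show ?thesis unfolding gam_def .
qed

lemma mu2_pos: "mu2 > 0" unfolding mu2 using FF1(5) FF2(5) by simp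
lemma C1_pos: "C1 > 0" unfolding C1 using d0_pos mu2_pos by simp

lemma gam_pos: "r \<in> {r0..R} \<Longrightarrow> gam r > 0" using gam_ge C1_pos by fastforce
lemma eps_nn: "r \<in> {r0..R} \<Longrightarrow> eps r \<ge> 0" unfolding eps_def using F1b F2b e1_nn e2_nn
  by (meson add_nonneg_nonneg less_imp_le mult_nonneg_nonneg)

lemma beta_ge: "r \<in> {r0..R} \<Longrightarrow> beta r \<ge> C1" unfolding beta_def using gam_ge eps_nn by fastforce

lemma beta_le: assumes r: "r \<in> {r0..R}" shows "beta r \<le> C0"
proof -
  define X1 where "X1 = gg1 (rho1 r0) + e1 r0"
  define X2 where "X2 = gg2 (rho2 r0) + e2 r0"
  have X1: "X1 \<ge> 0" unfolding X1_def using gpoly_pos[OF g1 rho1_nn] e1_nn by (simp add: add_nonneg_nonneg less_imp_le)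
  have X2: "X2 \<ge> 0" unfolding X2_def using gpoly_pos[OF g2 rho2_nn] e2_nn by (simp add: add_nonneg_nonneg less_imp_le)
  have m1: "Sup (F1 ` {sl..sh}) \<ge> 0" using F1b[OF r] by linarith
  have m2: "Sup (F2 ` {sl..sh}) \<ge> 0" using F2b[OF r] by linarith
  have r0r: "r0 \<le> r" using r by simp
  have "beta r = F1 (Shat r) * (gg1 (rho1 r) + e1 r) + F2 (Shat r) * (gg2 (rho2 r) + e2 r)"
    unfolding beta_def gam_def eps_def by (simp add: algebra_simps)
  also have "\<dots> \<le> Sup (F1 ` {sl..sh}) * X1 + Sup (F2 ` {sl..sh}) * X2"
  proof (rule add_mono)
    have "gg1 (rho1 r) + e1 r \<le> X1" unfolding X1_def
      using gpoly_mono[OF g1 rho1_nn rho1_le[OF r0r]] e1_le[OF r0r] by simp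
    moreover have "gg1 (rho1 r) + e1 r \<ge> 0" using gpoly_pos[OF g1 rho1_nn] e1_nn by (simp add: add_nonneg_nonneg less_imp_le)
    ultimately show "F1 (Shat r) * (gg1 (rho1 r) + e1 r) \<le> Sup (F1 ` {sl..sh}) * X1"
      using F1b[OF r] m1 by (intro mult_mono) auto
    have "gg2 (rho2 r) + e2 r \<le> X2" unfolding X2_def
      using gpoly_mono[OF g2 rho2_nn rho2_le[OF r0r]] e2_le[OF r0r] by simp
    moreover have "gg2 (rho2 r) + e2 r \<ge> 0" using gpoly_pos[OF g2 rho2_nn] e2_nn by (simp add: add_nonneg_nonneg less_imp_le)
    ultimately show "F2 (Shat r) * (gg2 (rho2 r) + e2 r) \<le> Sup (F2 ` {sl..sh}) * X2"
      using F2b[OF r] m2 by (intro mult_mono) auto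
  qed
  also have "\<dots> \<le> (Sup (F1 ` {sl..sh}) + Sup (F2 ` {sl..sh})) * (X1 + X2)"
    using X1 X2 m1 m2 by (simp add: algebra_simps add_nonneg_nonneg mult_nonneg_nonneg)
  also have "\<dots> = C0" unfolding C0 mu1 d4_eq X1_def X2_def by simp
  finally show ?thesis .
qed

lemma C0_pos: "C0 > 0" using beta_le[of r0] beta_ge[of r0] C1_pos R by fastforce
lemma C1_le_C0: "C1 \<le> C0" using beta_le[of r0] beta_ge[of r0] R by fastforce
lemma kappa0_pos: "kappa0 > 0" unfolding kappa0 using C0_pos C1_pos by simp
lemma mu3_nn: "mu3 \<ge> 0"
proof -
  have "\<bar>deriv F1 sl\<bar> \<le> Sup ((\<lambda>s. \<bar>deriv F1 s\<bar>) ` {sl..sh})" using FF1(6) sl_sh by auto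
  moreover have "\<bar>deriv F2 sl\<bar> \<le> Sup ((\<lambda>s. \<bar>deriv F2 s\<bar>) ` {sl..sh})" using FF2(6) sl_sh by auto
  ultimately show ?thesis unfolding mu3 by (smt (verit))
qed
lemma d2_nn: "d2 \<ge> 0" unfolding d2 using gpoly_pos[OF g1, of "\<bar>c1\<bar> * r0 powr (1 - real CARD('n))"] gpoly_pos[OF g2, of "\<bar>c2\<bar> * r0 powr (1 - real CARD('n))"]
  by (simp add: add_nonneg_nonneg mult_nonneg_nonneg less_imp_le)
lemma C2_nn: "C2 \<ge> 0" unfolding C2 using d2_nn mu3_nn by simp
lemma sR_pos: "sR > 0" unfolding sR using kappa0_pos C2_nn R r0pos nn2
  by (intro mult_pos_pos add_pos_nonneg mult_nonneg_nonneg) auto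
lemma q_pos: "q > 0" unfolding q using kappa0_pos C0_pos sR_pos by simp

lemma Scont: "continuous_on {r0..R} Shat"
  using Sode by (intro DERIV_continuous_on) blast

lemma Sdiff: "r \<in> {r0<..<R} \<Longrightarrow> Shat differentiable (at r)"
proof -
  assume r: "r \<in> {r0<..<R}"
  then have "(Shat has_real_derivative (Gs gg2 (c2 * r powr (1 - real CARD('n))) * F2 (Shat r)
         - Gs gg1 (c1 * r powr (1 - real CARD('n))) * F1 (Shat r))) (at r within {r0..R})"
    using Sode by auto
  moreover have "at r within {r0..R} = at r" using r by (intro at_within_interior) simp
  ultimately show ?thesis unfolding real_differentiable_def by auto
qed

lemma F1cont01: "continuous_on {0<..<1} F1"
  using FF1(2) by (intro continuous_at_imp_continuous_on) (auto intro: differentiable_imp_continuous_within)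
lemma F2cont01: "continuous_on {0<..<1} F2"
  using FF2(2) by (intro continuous_at_imp_continuous_on) (auto intro: differentiable_imp_continuous_within)

lemma S_img: "Shat ` {r0..R} \<subseteq> {0<..<1}" using S01 by blast

lemma F1S_cont: "continuous_on {r0..R} (\<lambda>r. F1 (Shat r))"
  by (rule continuous_on_compose2[OF F1cont01 Scont S_img])
lemma F2S_cont: "continuous_on {r0..R} (\<lambda>r. F2 (Shat r))"
  by (rule continuous_on_compose2[OF F2cont01 Scont S_img])

lemma F1S_diff: "r \<in> {r0<..<R} \<Longrightarrow> (\<lambda>r. F1 (Shat r)) differentiable (at r)"
  using differentiable_compose[of F1 Shat r UNIV] Sdiff FF1(2) S01 by auto
lemma F2S_diff: "r \<in> {r0<..<R} \<Longrightarrow> (\<lambda>r. F2 (Shat r)) differentiable (at r)"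
  using differentiable_compose[of F2 Shat r UNIV] Sdiff FF2(2) S01 by auto

lemma pos_r: "r \<in> {r0..R} \<Longrightarrow> r > 0" using r0pos by simp

lemma gg1_cont: "continuous_on {r0..R} (\<lambda>r. gg1 (rho1 r))"
  unfolding rho1_def using pos_r gpoly_cont by (intro cont_on_pos grho_cont) auto
lemma gg2_cont: "continuous_on {r0..R} (\<lambda>r. gg2 (rho2 r))"
  unfolding rho2_def using pos_r gpoly_cont by (intro cont_on_pos grho_cont) auto
lemma gd1_cont: "continuous_on {r0..R} (\<lambda>r. gd1 (rho1 r))"
  unfolding rho1_def using pos_r gderiv_cont by (intro cont_on_pos grho_cont) auto
lemma gd2_cont: "continuous_on {r0..R} (\<lambda>r. gd2 (rho2 r))"
  unfolding rho2_def using pos_r gderiv_cont by (intro cont_on_pos grho_cont) auto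
lemma rho1_cont: "continuous_on {r0..R} rho1"
  unfolding rho1_def[abs_def] using pos_r rho_cont by (intro cont_on_pos) auto
lemma rho2_cont: "continuous_on {r0..R} rho2"
  unfolding rho2_def[abs_def] using pos_r rho_cont by (intro cont_on_pos) auto

lemma e1_cont: "continuous_on {r0..R} e1"
proof (cases "c1 = 0")
  case True then have "e1 = (\<lambda>r. 0)" unfolding e1_def by auto
  then show ?thesis by simp
next
  case False then have "e1 = (\<lambda>r. gd1 (rho1 r) * rho1 r)" unfolding e1_def by auto
  then show ?thesis using gd1_cont rho1_cont by (simp add: continuous_on_mult)
qed
lemma e2_cont: "continuous_on {r0..R} e2"
proof (cases "c2 = 0")
  case True then have "e2 = (\<lambda>r. 0)" unfolding e2_def by auto
  then show ?thesis by simp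
next
  case False then have "e2 = (\<lambda>r. gd2 (rho2 r) * rho2 r)" unfolding e2_def by auto
  then show ?thesis using gd2_cont rho2_cont by (simp add: continuous_on_mult)
qed

lemma gam_cont: "continuous_on {r0..R} gam"
  unfolding gam_def[abs_def] using F1S_cont F2S_cont gg1_cont gg2_cont by (intro continuous_on_add continuous_on_mult)
lemma eps_cont: "continuous_on {r0..R} eps"
  unfolding eps_def[abs_def] using F1S_cont F2S_cont e1_cont e2_cont by (intro continuous_on_add continuous_on_mult)
lemma beta_cont: "continuous_on {r0..R} beta"
  unfolding beta_def[abs_def] using gam_cont eps_cont by (intro continuous_on_add)

lemma pos_r': "r \<in> {r0<..<R} \<Longrightarrow> r > 0" using r0pos by simp

lemma beta_diff: assumes r: "r \<in> {r0<..<R}" shows "beta differentiable (at r)"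
proof -
  have rp: "r > 0" using pos_r'[OF r] .
  have g1d: "(\<lambda>r. gg1 (rho1 r)) differentiable (at r)" unfolding rho1_def using gpoly_diff rp by (intro grho_diff) auto
  have g2d: "(\<lambda>r. gg2 (rho2 r)) differentiable (at r)" unfolding rho2_def using gpoly_diff rp by (intro grho_diff) auto
  have d1d: "(\<lambda>r. gd1 (rho1 r)) differentiable (at r)" unfolding rho1_def using gderiv_diff rp by (intro grho_diff) auto
  have d2d: "(\<lambda>r. gd2 (rho2 r)) differentiable (at r)" unfolding rho2_def using gderiv_diff rp by (intro grho_diff) auto
  have r1d: "rho1 differentiable (at r)" unfolding rho1_def[abs_def] using rho_diff rp by blast
  have r2d: "rho2 differentiable (at r)" unfolding rho2_def[abs_def] using rho_diff rp by blast
  have e1d: "e1 differentiable (at r)"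
  proof (cases "c1 = 0")
    case True then have "e1 = (\<lambda>r. 0)" unfolding e1_def by auto
    then show ?thesis by simp
  next
    case False then have "e1 = (\<lambda>r. gd1 (rho1 r) * rho1 r)" unfolding e1_def by auto
    then show ?thesis using d1d r1d by simp
  qed
  have e2d: "e2 differentiable (at r)"
  proof (cases "c2 = 0")
    case True then have "e2 = (\<lambda>r. 0)" unfolding e2_def by auto
    then show ?thesis by simp
  next
    case False then have "e2 = (\<lambda>r. gd2 (rho2 r) * rho2 r)" unfolding e2_def by auto
    then show ?thesis using d2d r2d by simp
  qed
  show ?thesis unfolding beta_def[abs_def] gam_def[abs_def] eps_def[abs_def]
    using F1S_diff[OF r] F2S_diff[OF r] g1d g2d e1d e2d by simp
qed

definition "Bop y = F1 (Shat (norm y)) *\<^sub>R Gjac gg1 gd1 (ustar c1 y) + F2 (Shat (norm y)) *\<^sub>R Gjac gg2 gd2 (ustar c2 (y::real^'n))"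
definition "Aop y = matrix_inv (Bop (y::real^'n))"
definition "bop y = deriv F2 (Shat (norm y)) *\<^sub>R Gvec gg2 (ustar c2 y) - deriv F1 (Shat (norm y)) *\<^sub>R Gvec gg1 (ustar c1 (y::real^'n))"

lemma Bop_eq: fixes y :: "real^'n" assumes "norm y \<in> {r0..R}"
  shows "Bop y = gam (norm y) *\<^sub>R mat 1 + (eps (norm y) / (norm y)\<^sup>2) *\<^sub>R outer y y"
proof -
  have y0: "y \<noteq> 0" using assms r0pos by auto
  show ?thesis unfolding Bop_def Gjac_ustar[OF y0]
    unfolding rho1_def[symmetric] rho2_def[symmetric] e1_def[symmetric] e2_def[symmetric] gam_def eps_def
    by (simp add: algebra_simps scaleR_add_left add_divide_distrib)
qed

lemma Aop_eq: fixes y :: "real^'n" assumes r: "norm y \<in> {r0..R}"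
  shows "Aop y = (1 / gam (norm y)) *\<^sub>R (mat 1 - (eps (norm y) / ((norm y)\<^sup>2 * beta (norm y))) *\<^sub>R outer y y)"
proof -
  have np: "norm y > 0" using pos_r[OF r] .
  have "Aop y = (1 / gam (norm y)) *\<^sub>R (mat 1 - ((eps (norm y) / (norm y)\<^sup>2) / (gam (norm y) + (eps (norm y) / (norm y)\<^sup>2) * (y \<bullet> y))) *\<^sub>R outer y y)"
    unfolding Aop_def Bop_eq[OF r] using gam_pos[OF r] eps_nn[OF r] np
    by (intro inv_formula) (auto intro: divide_nonneg_pos)
  moreover have "(eps (norm y) / (norm y)\<^sup>2) / (gam (norm y) + (eps (norm y) / (norm y)\<^sup>2) * (y \<bullet> y)) = eps (norm y) / ((norm y)\<^sup>2 * beta (norm y))"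
    using np unfolding beta_def by (simp add: power2_norm_eq_inner[symmetric] field_simps)
  ultimately show ?thesis by simp
qed

lemma beta_pos: "r \<in> {r0..R} \<Longrightarrow> beta r > 0" using beta_ge C1_pos by fastforce

lemma Aop_y: fixes y :: "real^'n" assumes r: "norm y \<in> {r0..R}"
  shows "Aop y *v y = (1 / beta (norm y)) *\<^sub>R y"
proof -
  have np: "norm y > 0" using pos_r[OF r] .
  have g: "gam (norm y) > 0" using gam_pos[OF r] .
  have b: "beta (norm y) > 0" using beta_pos[OF r] .
  have "Aop y *v y = ((1 / gam (norm y)) * (1 - eps (norm y) / ((norm y)\<^sup>2 * beta (norm y)) * (y \<bullet> y))) *\<^sub>R y"
    unfolding Aop_eq[OF r] by (simp add: smv matrix_vector_mult_diff_rdistrib outer_mv algebra_simps)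
  also have "(1 / gam (norm y)) * (1 - eps (norm y) / ((norm y)\<^sup>2 * beta (norm y)) * (y \<bullet> y)) = 1 / beta (norm y)"
  proof -
    have "eps (norm y) / ((norm y)\<^sup>2 * beta (norm y)) * (y \<bullet> y) = eps (norm y) / beta (norm y)"
      using np b unfolding power2_norm_eq_inner[symmetric] by (simp add: field_simps)
    moreover have "1 - eps (norm y) / beta (norm y) = gam (norm y) / beta (norm y)"
      using b unfolding beta_def by (simp add: field_simps)
    ultimately show ?thesis using g by simp
  qed
  finally show ?thesis .
qed

lemma Aop_tr: fixes y :: "real^'n" assumes r: "norm y \<in> {r0..R}" and lin: "linear f" and qf: "\<forall>e. e \<bullet> f e \<le> 0"
  shows "(\<Sum>i\<in>UNIV. (Aop y *v f (axis i 1)) $ i) \<le> 0"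
proof -
  have np: "norm y > 0" using pos_r[OF r] .
  have b: "beta (norm y) > 0" using beta_pos[OF r] .
  have k0: "eps (norm y) / ((norm y)\<^sup>2 * beta (norm y)) \<ge> 0" using eps_nn[OF r] np b by simp
  have k1: "eps (norm y) / ((norm y)\<^sup>2 * beta (norm y)) * (y \<bullet> y) \<le> 1"
  proof -
    have "eps (norm y) / ((norm y)\<^sup>2 * beta (norm y)) * (y \<bullet> y) = eps (norm y) / beta (norm y)"
      using np b unfolding power2_norm_eq_inner[symmetric] by (simp add: field_simps)
    also have "\<dots> \<le> 1" using b gam_pos[OF r] unfolding beta_def by simp
    finally show ?thesis .
  qed
  show ?thesis unfolding Aop_eq[OF r] by (rule trace_neg[OF lin qf gam_pos[OF r] k0 k1])
qed

lemma normU: "y \<in> U \<Longrightarrow> norm y \<in> {r0<..<R}" using Usub by auto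
lemma normU': "y \<in> U \<Longrightarrow> norm y \<in> {r0..R}"
proof -
  assume "y \<in> U" then have "norm y \<in> {r0<..<R}" by (rule normU)
  then show ?thesis by auto
qed

lemma Aop_cont: "continuous_on U Aop"
proof -
  have nimg: "norm ` U \<subseteq> {r0..R}" using normU' by blast
  have cn: "continuous_on U (norm :: real^'n \<Rightarrow> real)" by (intro continuous_intros)
  have cg: "continuous_on U (\<lambda>y. gam (norm y))" by (rule continuous_on_compose2[OF gam_cont cn nimg])
  have ce: "continuous_on U (\<lambda>y. eps (norm y))" by (rule continuous_on_compose2[OF eps_cont cn nimg])
  have cb: "continuous_on U (\<lambda>y. beta (norm y))" by (rule continuous_on_compose2[OF beta_cont cn nimg])
  have co: "continuous_on U (\<lambda>y::real^'n. outer y y)"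
    unfolding outer_def by (intro continuous_on_vec_lambda continuous_intros)
  have n0: "0 \<notin> U" using normU' r0pos by fastforce
  have "continuous_on U (\<lambda>y. (1 / gam (norm y)) *\<^sub>R (mat 1 - (eps (norm y) / ((norm y)\<^sup>2 * beta (norm y))) *\<^sub>R outer y y))"
    using gam_pos beta_pos normU' pos_r n0
    by (intro continuous_intros cg ce cb co) (auto simp: less_imp_neq[symmetric])
  then show ?thesis using Aop_eq normU' by (auto intro: continuous_on_cong[THEN iffD1])
qed

lemma Gv1_le: fixes y :: "real^'n" assumes r: "norm y \<in> {r0..R}"
  shows "norm (Gvec gg1 (ustar c1 y)) \<le> gg1 (rho1 r0) * rho1 r0"
proof -
  have y0: "y \<noteq> 0" using r r0pos by auto
  have nu: "norm (ustar c1 y) = rho1 (norm y)" unfolding rho1_def by (rule norm_ustar[OF y0])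
  have "norm (Gvec gg1 (ustar c1 y)) = gg1 (rho1 (norm y)) * rho1 (norm y)"
    unfolding norm_Gvec nu using gpoly_pos[OF g1 rho1_nn, of "norm y"] by simp
  also have "\<dots> \<le> gg1 (rho1 r0) * rho1 r0"
    using gpoly_mono[OF g1 rho1_nn rho1_le] rho1_le rho1_nn gpoly_pos[OF g1 rho1_nn] r
    by (intro mult_mono) (auto simp: less_imp_le)
  finally show ?thesis .
qed
lemma Gv2_le: fixes y :: "real^'n" assumes r: "norm y \<in> {r0..R}"
  shows "norm (Gvec gg2 (ustar c2 y)) \<le> gg2 (rho2 r0) * rho2 r0"
proof -
  have y0: "y \<noteq> 0" using r r0pos by auto
  have nu: "norm (ustar c2 y) = rho2 (norm y)" unfolding rho2_def by (rule norm_ustar[OF y0])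
  have "norm (Gvec gg2 (ustar c2 y)) = gg2 (rho2 (norm y)) * rho2 (norm y)"
    unfolding norm_Gvec nu using gpoly_pos[OF g2 rho2_nn, of "norm y"] by simp
  also have "\<dots> \<le> gg2 (rho2 r0) * rho2 r0"
    using gpoly_mono[OF g2 rho2_nn rho2_le] rho2_le rho2_nn gpoly_pos[OF g2 rho2_nn] r
    by (intro mult_mono) (auto simp: less_imp_le)
  finally show ?thesis .
qed

lemma bop_norm: fixes y :: "real^'n" assumes r: "norm y \<in> {r0..R}" shows "norm (bop y) \<le> C2"
proof -
  define m1 where "m1 = Sup ((\<lambda>s. \<bar>deriv F1 s\<bar>) ` {sl..sh})"
  define m2 where "m2 = Sup ((\<lambda>s. \<bar>deriv F2 s\<bar>) ` {sl..sh})"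
  define Y1 where "Y1 = gg1 (rho1 r0) * rho1 r0"
  define Y2 where "Y2 = gg2 (rho2 r0) * rho2 r0"
  have S: "Shat (norm y) \<in> {sl..sh}" using Ssl[OF r] .
  have dm1: "\<bar>deriv F1 (Shat (norm y))\<bar> \<le> m1" unfolding m1_def using FF1(6) S by blast
  have dm2: "\<bar>deriv F2 (Shat (norm y))\<bar> \<le> m2" unfolding m2_def using FF2(6) S by blast
  have m1p: "m1 \<ge> 0" using dm1 by linarith
  have m2p: "m2 \<ge> 0" using dm2 by linarith
  have Y1p: "Y1 \<ge> 0" unfolding Y1_def using gpoly_pos[OF g1 rho1_nn] rho1_nn by (simp add: less_imp_le)
  have Y2p: "Y2 \<ge> 0" unfolding Y2_def using gpoly_pos[OF g2 rho2_nn] rho2_nn by (simp add: less_imp_le)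
  have "norm (bop y) \<le> \<bar>deriv F2 (Shat (norm y))\<bar> * norm (Gvec gg2 (ustar c2 y)) + \<bar>deriv F1 (Shat (norm y))\<bar> * norm (Gvec gg1 (ustar c1 y))"
    unfolding bop_def using norm_triangle_ineq4 by (metis norm_scaleR)
  also have "\<dots> \<le> m2 * Y2 + m1 * Y1"
    using Gv1_le[OF r] Gv2_le[OF r] dm1 dm2 m1p m2p unfolding Y1_def Y2_def
    by (intro add_mono mult_mono) auto
  also have "\<dots> \<le> (m1 + m2) * (Y1 + Y2)" using m1p m2p Y1p Y2p by (simp add: algebra_simps)
  also have "\<dots> = C2" unfolding C2 mu3 d2 m1_def m2_def Y1_def Y2_def rho1_def rho2_def by simp
  finally show ?thesis .
qed

lemma bop_y: fixes y :: "real^'n" assumes y: "y \<in> U" shows "bop y \<bullet> y \<le> C2 * R"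
proof -
  have "bop y \<bullet> y \<le> norm (bop y) * norm y" by (rule norm_cauchy_schwarz)
  also have "\<dots> \<le> C2 * R" using bop_norm[OF normU'[OF y]] normU[OF y] C2_nn
    by (intro mult_mono) auto
  finally show ?thesis .
qed

definition "xi r = C0 * r0\<^sup>2 / 2 + integral {r0..r} (\<lambda>\<rho>. beta \<rho> * \<rho>)"

lemma bint_cont: "continuous_on {r0..R} (\<lambda>\<rho>. beta \<rho> * \<rho>)"
  using beta_cont by (intro continuous_intros)

lemma xi_deriv_within: "r \<in> {r0..R} \<Longrightarrow> (xi has_real_derivative beta r * r) (at r within {r0..R})"
proof -
  assume r: "r \<in> {r0..R}"
  have "((\<lambda>u. integral {r0..u} (\<lambda>\<rho>. beta \<rho> * \<rho>)) has_vector_derivative beta r * r) (at r within {r0..R})"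
    by (rule integral_has_vector_derivative[OF bint_cont r])
  then have "((\<lambda>u. integral {r0..u} (\<lambda>\<rho>. beta \<rho> * \<rho>)) has_real_derivative beta r * r) (at r within {r0..R})"
    by (simp add: has_real_derivative_iff_has_vector_derivative)
  from DERIV_add[OF DERIV_const[of "C0 * r0\<^sup>2 / 2"] this] show ?thesis unfolding xi_def[abs_def] by simp
qed

lemma xi_deriv: "r \<in> {r0<..<R} \<Longrightarrow> (xi has_real_derivative beta r * r) (at r)"
proof -
  assume r: "r \<in> {r0<..<R}"
  have "at r within {r0..R} = at r" using r by (intro at_within_interior) simp
  then show ?thesis using xi_deriv_within[of r] r by simp
qed

lemma xi_cont: "continuous_on {r0..R} xi"
  using xi_deriv_within by (intro DERIV_continuous_on) blast

lemma xi_ge: assumes r: "r \<in> {r0..R}" shows "xi r \<ge> C0 * r0\<^sup>2 / 2"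
proof -
  have "(\<lambda>\<rho>. beta \<rho> * \<rho>) integrable_on {r0..r}"
    using r by (intro integrable_continuous_real continuous_on_subset[OF bint_cont]) auto
  moreover have "\<And>x. x \<in> {r0..r} \<Longrightarrow> 0 \<le> beta x * x" using r beta_pos pos_r
    by (simp add: less_imp_le)
  ultimately have "0 \<le> integral {r0..r} (\<lambda>\<rho>. beta \<rho> * \<rho>)" by (rule Henstock_Kurzweil_Integration.integral_nonneg)
  then show ?thesis unfolding xi_def by simp
qed

lemma xi_le: assumes r: "r \<in> {r0..R}" shows "xi r \<le> C0 * r\<^sup>2 / 2"
proof -
  have i1: "(\<lambda>\<rho>. beta \<rho> * \<rho>) integrable_on {r0..r}"
    using r by (intro integrable_continuous_real continuous_on_subset[OF bint_cont]) auto
  have hi: "((\<lambda>\<rho>. C0 * \<rho>) has_integral (C0 * r\<^sup>2 / 2 - C0 * r0\<^sup>2 / 2)) {r0..r}"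
  proof -
    have "((\<lambda>\<rho>. C0 * \<rho>\<^sup>2 / 2) has_vector_derivative C0 * x) (at x within {r0..r})" for x
    proof -
      have "((\<lambda>\<rho>. C0 * \<rho>\<^sup>2 / 2) has_real_derivative C0 * x) (at x within {r0..r})"
        by (auto intro!: derivative_eq_intros simp: power2_eq_square)
      then show ?thesis by (simp add: has_real_derivative_iff_has_vector_derivative)
    qed
    then show ?thesis using r by (intro fundamental_theorem_of_calculus) auto
  qed
  have "integral {r0..r} (\<lambda>\<rho>. beta \<rho> * \<rho>) \<le> integral {r0..r} (\<lambda>\<rho>. C0 * \<rho>)"
    using i1 hi r beta_le pos_r by (intro integral_le) (auto intro!: mult_right_mono simp: less_imp_le)
  also have "\<dots> = C0 * r\<^sup>2 / 2 - C0 * r0\<^sup>2 / 2" using hi by (rule integral_unique)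
  finally show ?thesis unfolding xi_def by simp
qed

lemma kC1: "kappa0 * C1 = C0 / 2" unfolding kappa0 using C1_pos by simp

lemma xi_kappa: assumes r: "r \<in> {r0..R}" shows "xi r \<le> kappa0 * (beta r * r\<^sup>2)"
proof -
  have "xi r \<le> C0 * r\<^sup>2 / 2" by (rule xi_le[OF r])
  also have "\<dots> = kappa0 * (C1 * r\<^sup>2)" using kC1 by (simp add: algebra_simps)
  also have "\<dots> \<le> kappa0 * (beta r * r\<^sup>2)" using beta_ge[OF r] kappa0_pos
    by (intro mult_left_mono mult_right_mono) auto
  finally show ?thesis .
qed

lemma Xd: fixes y :: "real^'n" assumes y: "norm y \<in> {r0<..<R}"
  shows "((\<lambda>y. xi (norm y)) has_derivative (\<lambda>h. beta (norm y) * (y \<bullet> h))) (at y)"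
proof -
  have y0: "y \<noteq> 0" using y r0pos by auto
  have nd: "(norm has_derivative (\<lambda>h. h \<bullet> sgn y)) (at y)" using has_derivative_norm[OF y0] by simp
  have xd: "(xi has_derivative (*) (beta (norm y) * norm y)) (at (norm y))"
    using xi_deriv[OF y] by (simp add: has_field_derivative_def)
  have "((xi \<circ> norm) has_derivative ((*) (beta (norm y) * norm y) \<circ> (\<lambda>h. h \<bullet> sgn y))) (at y)"
    by (rule diff_chain_at[OF nd xd])
  moreover have "((*) (beta (norm y) * norm y) \<circ> (\<lambda>h. h \<bullet> sgn y)) = (\<lambda>h. beta (norm y) * (y \<bullet> h))"
    using y0 by (auto simp: sgn_div_norm inner_commute field_simps)
  ultimately show ?thesis by (simp add: o_def)
qed

definition "GG \<xi> \<tau> = \<tau> powr (- sR) * exp (- \<xi> / \<tau>)"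
definition "cc = (exp 1 * (C0 * r0\<^sup>2 / 2) / sR) powr sR"
definition "tau ep t = (t + ep) / kappa0"
definition "vb M del ep (y::real^'n) t = M + del * (1 + t) - M * cc * GG (xi (norm y)) (tau ep t)"
definition "HH M ep (y::real^'n) t = M * cc * GG (xi (norm y)) (tau ep t) / tau ep t"

lemma GG_pos: "\<tau> > 0 \<Longrightarrow> GG \<xi> \<tau> > 0" unfolding GG_def by simp

lemma GG_dxi: assumes "\<tau> > 0" shows "((\<lambda>\<xi>. GG \<xi> \<tau>) has_real_derivative (- GG \<xi> \<tau> / \<tau>)) (at \<xi>)"
proof -
  have "((\<lambda>\<xi>. \<tau> powr (- sR) * exp (- \<xi> / \<tau>)) has_real_derivative (\<tau> powr (- sR) * (exp (- \<xi> / \<tau>) * (- 1 / \<tau>)))) (at \<xi>)"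
    using assms by (auto intro!: derivative_eq_intros)
  then show ?thesis unfolding GG_def by (simp add: algebra_simps)
qed

lemma GG_dtau: assumes "\<tau> > 0" shows "((\<lambda>\<tau>. GG \<xi> \<tau>) has_real_derivative (GG \<xi> \<tau> * (- sR / \<tau> + \<xi> / \<tau>\<^sup>2))) (at \<tau>)"
proof -
  have "((\<lambda>\<tau>. \<tau> powr (- sR) * exp (- \<xi> / \<tau>)) has_real_derivative
     ((- sR) * \<tau> powr (- sR - 1) * exp (- \<xi> / \<tau>) + \<tau> powr (- sR) * (exp (- \<xi> / \<tau>) * (\<xi> / \<tau>\<^sup>2)))) (at \<tau>)"
    using assms by (auto intro!: derivative_eq_intros simp: power2_eq_square field_simps)
  moreover have "\<tau> powr (- sR - 1) = \<tau> powr (- sR) / \<tau>" using assms by (simp add: powr_diff)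
  ultimately show ?thesis unfolding GG_def by (simp add: algebra_simps)
qed

lemma gradx_eq: assumes "((\<lambda>y. w y t) has_derivative (\<lambda>h. G \<bullet> h)) (at x)" shows "gradx w x t = G"
proof -
  have "frechet_derivative (\<lambda>y. w y t) (at x) = (\<lambda>h. G \<bullet> h)" using assms frechet_derivative_at by metis
  then show ?thesis unfolding gradx_def by (simp add: vec_eq_iff inner_axis)
qed

lemma tau_pos: "t + ep > 0 \<Longrightarrow> tau ep t > 0" unfolding tau_def using kappa0_pos by simp

lemma GX_dy: fixes y :: "real^'n" assumes y: "norm y \<in> {r0<..<R}" and tp: "\<tau> > 0"
  shows "((\<lambda>y. GG (xi (norm y)) \<tau>) has_derivative (\<lambda>h. (- GG (xi (norm y)) \<tau> / \<tau>) * (beta (norm y) * (y \<bullet> h)))) (at y)"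
proof -
  have gd: "((\<lambda>\<xi>. GG \<xi> \<tau>) has_derivative (*) (- GG (xi (norm y)) \<tau> / \<tau>)) (at (xi (norm y)))"
    using GG_dxi[OF tp] by (simp add: has_field_derivative_def)
  from diff_chain_at[OF Xd[OF y] gd] show ?thesis by (simp add: o_def)
qed

lemma vb_dy: fixes y :: "real^'n" assumes y: "norm y \<in> {r0<..<R}" and tp: "t + ep > 0"
  shows "((\<lambda>y. vb M del ep y t) has_derivative (\<lambda>h. ((HH M ep y t * beta (norm y)) *\<^sub>R y) \<bullet> h)) (at y)"
proof -
  have "((\<lambda>y. M + del * (1 + t) - M * cc * GG (xi (norm y)) (tau ep t)) has_derivative
      (\<lambda>h. 0 - M * cc * ((- GG (xi (norm y)) (tau ep t) / tau ep t) * (beta (norm y) * (y \<bullet> h))))) (at y)"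
    by (intro has_derivative_diff has_derivative_const has_derivative_mult_right GX_dy[OF y tau_pos[OF tp]])
  then show ?thesis unfolding vb_def[abs_def] HH_def by (simp add: algebra_simps)
qed

lemma gradx_vb: fixes y :: "real^'n" assumes y: "norm y \<in> {r0<..<R}" and tp: "t + ep > 0"
  shows "gradx (vb M del ep) y t = (HH M ep y t * beta (norm y)) *\<^sub>R y"
  using vb_dy[OF y tp] by (intro gradx_eq) simp

lemma HH_dy: fixes y :: "real^'n" assumes y: "norm y \<in> {r0<..<R}" and tp: "t + ep > 0"
  shows "((\<lambda>y. HH M ep y t) has_derivative (\<lambda>h. - (HH M ep y t / tau ep t) * (beta (norm y) * (y \<bullet> h)))) (at y)"
proof -
  have "((\<lambda>y. (M * cc / tau ep t) * GG (xi (norm y)) (tau ep t)) has_derivative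
      (\<lambda>h. (M * cc / tau ep t) * ((- GG (xi (norm y)) (tau ep t) / tau ep t) * (beta (norm y) * (y \<bullet> h))))) (at y)"
    by (rule has_derivative_mult_right[OF GX_dy[OF y tau_pos[OF tp]]])
  then show ?thesis unfolding HH_def[abs_def] by (simp add: algebra_simps)
qed

lemma HH_diff: fixes y :: "real^'n" assumes y: "norm y \<in> {r0<..<R}" and tp: "t + ep > 0"
  shows "(\<lambda>y. HH M ep y t) differentiable (at y)"
  using HH_dy[OF y tp] differentiable_def by blast

lemma bn_diff: fixes y :: "real^'n" assumes y: "norm y \<in> {r0<..<R}"
  shows "(\<lambda>y. beta (norm y)) differentiable (at y)"
proof -
  have y0: "y \<noteq> 0" using y r0pos by auto
  show ?thesis using differentiable_compose[of beta norm y UNIV] beta_diff[OF y] differentiable_norm_at[OF y0] by simp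
qed

lemma gv_diff: fixes x :: "real^'n" assumes x: "x \<in> U" and tp: "t + ep > 0"
  shows "(\<lambda>y. gradx (vb M del ep) y t) differentiable (at x)"
proof -
  have "(\<lambda>y. (HH M ep y t * beta (norm y)) *\<^sub>R y) differentiable (at x)"
    using HH_diff[OF normU[OF x] tp] bn_diff[OF normU[OF x]] by (intro differentiable_scaleR differentiable_mult differentiable_ident)
  then obtain D where D: "((\<lambda>y. (HH M ep y t * beta (norm y)) *\<^sub>R y) has_derivative D) (at x)" unfolding differentiable_def by blast
  have "((\<lambda>y. gradx (vb M del ep) y t) has_derivative D) (at x)"
    by (rule has_derivative_transform_within_open[OF D Uopen x]) (simp add: gradx_vb[OF normU tp])
  then show ?thesis unfolding differentiable_def by blast
qed

lemma Agv: fixes y :: "real^'n" assumes y: "y \<in> U" and tp: "t + ep > 0"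
  shows "Aop y *v gradx (vb M del ep) y t = HH M ep y t *\<^sub>R y"
proof -
  have "Aop y *v gradx (vb M del ep) y t = (HH M ep y t * beta (norm y)) *\<^sub>R (Aop y *v y)"
    unfolding gradx_vb[OF normU[OF y] tp] by (simp add: matrix_vector_mult_scaleR)
  also have "\<dots> = HH M ep y t *\<^sub>R y" unfolding Aop_y[OF normU'[OF y]] using beta_pos[OF normU'[OF y]] by simp
  finally show ?thesis .
qed

lemma Agv_d: fixes x :: "real^'n" assumes x: "x \<in> U" and tp: "t + ep > 0"
  shows "((\<lambda>y. Aop y *v gradx (vb M del ep) y t) has_derivative
     (\<lambda>e. (- (HH M ep x t / tau ep t) * (beta (norm x) * (x \<bullet> e))) *\<^sub>R x + HH M ep x t *\<^sub>R e)) (at x)"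
proof -
  have "((\<lambda>y. HH M ep y t *\<^sub>R y) has_derivative
     (\<lambda>e. HH M ep x t *\<^sub>R e + (- (HH M ep x t / tau ep t) * (beta (norm x) * (x \<bullet> e))) *\<^sub>R x)) (at x)"
    by (rule has_derivative_scaleR[OF HH_dy[OF normU[OF x] tp] has_derivative_ident])
  then have "((\<lambda>y. HH M ep y t *\<^sub>R y) has_derivative
     (\<lambda>e. (- (HH M ep x t / tau ep t) * (beta (norm x) * (x \<bullet> e))) *\<^sub>R x + HH M ep x t *\<^sub>R e)) (at x)"
    by (simp add: add.commute)
  then show ?thesis
    by (rule has_derivative_transform_within_open[OF _ Uopen x]) (simp add: Agv tp)
qed

lemma div_vb: fixes x :: "real^'n" assumes x: "x \<in> U" and tp: "t + ep > 0"
  shows "divg (\<lambda>y. Aop y *v gradx (vb M del ep) y t) x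
     = real CARD('n) * HH M ep x t - (HH M ep x t / tau ep t) * beta (norm x) * (x \<bullet> x)"
proof -
  define H where "H = HH M ep x t"
  define a where "a = - (HH M ep x t / tau ep t) * beta (norm x)"
  have fd: "frechet_derivative (\<lambda>y. Aop y *v gradx (vb M del ep) y t) (at x)
     = (\<lambda>e. (a * (x \<bullet> e)) *\<^sub>R x + H *\<^sub>R e)"
  proof -
    have "frechet_derivative (\<lambda>y. Aop y *v gradx (vb M del ep) y t) (at x)
     = (\<lambda>e. (- (HH M ep x t / tau ep t) * (beta (norm x) * (x \<bullet> e))) *\<^sub>R x + HH M ep x t *\<^sub>R e)"
      by (rule sym[OF frechet_derivative_at[OF Agv_d[OF x tp]]])
    then show ?thesis unfolding a_def H_def by (simp add: mult.assoc)
  qed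
  have xa: "x \<bullet> axis i 1 = x $ i" for i by (simp add: inner_axis)
  have comp: "((a * (x \<bullet> axis i 1)) *\<^sub>R x + H *\<^sub>R axis i 1) $ i = a * (x $ i * x $ i) + H" for i
    unfolding xa by simp
  have "divg (\<lambda>y. Aop y *v gradx (vb M del ep) y t) x = (\<Sum>i\<in>UNIV. a * (x $ i * x $ i) + H)"
    unfolding divg_def fd comp ..
  also have "\<dots> = a * (x \<bullet> x) + real CARD('n) * H"
    by (simp add: sum.distrib sum_distrib_left inner_vec_def)
  finally show ?thesis unfolding a_def H_def by simp
qed

lemma vb_dt: fixes y :: "real^'n" assumes tp: "t + ep > 0"
  shows "((\<lambda>t. vb M del ep y t) has_real_derivative
     (del - M * cc * (GG (xi (norm y)) (tau ep t) * (- sR / tau ep t + xi (norm y) / (tau ep t)\<^sup>2)) / kappa0)) (at t)"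
proof -
  have td: "((\<lambda>t. tau ep t) has_real_derivative 1 / kappa0) (at t)"
    unfolding tau_def[abs_def] using kappa0_pos by (auto intro!: derivative_eq_intros)
  have gd: "((\<lambda>t. GG (xi (norm y)) (tau ep t)) has_real_derivative
      (GG (xi (norm y)) (tau ep t) * (- sR / tau ep t + xi (norm y) / (tau ep t)\<^sup>2)) * (1 / kappa0)) (at t)"
    using DERIV_chain2[OF GG_dtau[OF tau_pos[OF tp]] td] .
  have "((\<lambda>t. M + del * (1 + t) - M * cc * GG (xi (norm y)) (tau ep t)) has_real_derivative
     (0 + del * (0 + 1) - M * cc * ((GG (xi (norm y)) (tau ep t) * (- sR / tau ep t + xi (norm y) / (tau ep t)\<^sup>2)) * (1 / kappa0)))) (at t)"
    by (intro DERIV_diff DERIV_add DERIV_const DERIV_cmult gd DERIV_ident)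
  then show ?thesis unfolding vb_def[abs_def] by simp
qed

lemma cc_pos: "cc > 0"
  unfolding cc_def using C0_pos r0pos sR_pos by simp

lemma dtime_vb: fixes x :: "real^'n" assumes tp: "t + ep > 0" and t: "t \<in> {0<..T}" and T: "T > 0"
  shows "dtime (vb M del ep) {0<..T} x t
     = del - M * cc * (GG (xi (norm x)) (tau ep t) * (- sR / tau ep t + xi (norm x) / (tau ep t)\<^sup>2)) / kappa0"
proof -
  have "t islimpt {0<..T}" using t T by simp
  then have nb: "at t within {0<..T} \<noteq> bot" using trivial_limit_within by blast
  have "((\<lambda>t. vb M del ep x t) has_vector_derivative
     (del - M * cc * (GG (xi (norm x)) (tau ep t) * (- sR / tau ep t + xi (norm x) / (tau ep t)\<^sup>2)) / kappa0)) (at t within {0<..T})"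
    using vb_dt[OF tp, of M del x] by (simp add: has_real_derivative_iff_has_vector_derivative has_vector_derivative_at_within)
  then show ?thesis unfolding dtime_def by (rule vector_derivative_within[OF nb])
qed

lemma sR_kappa: "sR / kappa0 = real CARD('n) + C2 * R" unfolding sR using kappa0_pos by simp

lemma Lv_pos: fixes x :: "real^'n" assumes x: "x \<in> U" and t: "t \<in> {0<..T}" and T: "T > 0"
  and ep: "ep > 0" and M: "M \<ge> 0" and del: "del > 0"
  shows "Lop Aop bop T (vb M del ep) x t \<ge> del"
proof -
  have tp: "t + ep > 0" using t ep by simp
  define \<tau> where "\<tau> = tau ep t"
  define \<xi> where "\<xi> = xi (norm x)"
  define G where "G = GG \<xi> \<tau>"
  define H where "H = HH M ep x t"
  define b where "b = bop x \<bullet> x"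
  define r2 where "r2 = x \<bullet> x"
  define \<beta> where "\<beta> = beta (norm x)"
  have taup: "\<tau> > 0" unfolding \<tau>_def using tau_pos[OF tp] .
  have HG: "H = M * cc * G / \<tau>" unfolding H_def HH_def G_def \<tau>_def \<xi>_def ..
  have "G > 0" unfolding G_def using GG_pos[OF taup] .
  then have Hp: "H \<ge> 0" unfolding HG using M cc_pos taup by simp
  have Lv: "Lop Aop bop T (vb M del ep) x t
     = del - M * cc * (G * (- sR / \<tau> + \<xi> / \<tau>\<^sup>2)) / kappa0
       - (real CARD('n) * H - (H / \<tau>) * \<beta> * r2) - bop x \<bullet> (H *\<^sub>R x)"
    unfolding Lop_def dtime_vb[OF tp t T] div_vb[OF x tp] Agv[OF x tp]
    unfolding G_def \<xi>_def \<tau>_def H_def \<beta>_def r2_def ..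
  also have "\<dots> = del + H * ((sR / kappa0 - \<xi> / (\<tau> * kappa0)) - real CARD('n) + \<beta> * r2 / \<tau> - b)"
    unfolding HG b_def using taup kappa0_pos by (simp add: field_simps power2_eq_square)
  also have "\<dots> = del + H * ((C2 * R - b) + (\<beta> * r2 - \<xi> / kappa0) / \<tau>)"
    unfolding sR_kappa using taup kappa0_pos by (simp add: field_simps)
  also have "\<dots> \<ge> del"
  proof -
    have "C2 * R - b \<ge> 0" unfolding b_def using bop_y[OF x] by simp
    moreover have "\<beta> * r2 - \<xi> / kappa0 \<ge> 0"
    proof -
      have "\<xi> \<le> kappa0 * (\<beta> * r2)" unfolding \<xi>_def \<beta>_def r2_def
        using xi_kappa[OF normU'[OF x]] by (simp add: power2_norm_eq_inner)
      then show ?thesis using kappa0_pos by (simp add: field_simps)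
    qed
    ultimately have "(C2 * R - b) + (\<beta> * r2 - \<xi> / kappa0) / \<tau> \<ge> 0" using taup by simp
    then show ?thesis using Hp by simp
  qed
  finally show ?thesis .
qed

lemma ue_bound: fixes u a :: real assumes u: "u > 0" and a: "a > 0"
  shows "u powr a * exp (- u) \<le> a powr a * exp (- a)"
proof -
  have "ln (u / a) \<le> u / a - 1" using u a by (intro ln_le_minus_one) simp
  then have "a * ln (u / a) \<le> u - a" using a by (simp add: field_simps)
  then have "a * ln u - u \<le> a * ln a - a" using u a by (simp add: ln_div algebra_simps)
  then have "exp (a * ln u - u) \<le> exp (a * ln a - a)" by simp
  then show ?thesis using u a by (simp add: exp_diff powr_def exp_minus field_simps)
qed

lemma GG_upper: assumes x: "\<xi> > 0" and t: "\<tau> > 0"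
  shows "GG \<xi> \<tau> \<le> (sR / (exp 1 * \<xi>)) powr sR"
proof -
  define u where "u = \<xi> / \<tau>"
  have up: "u > 0" unfolding u_def using x t by simp
  have uu: "u powr sR = \<xi> powr sR / \<tau> powr sR" unfolding u_def using x t by (simp add: powr_divide)
  have "\<tau> powr (- sR) = u powr sR * \<xi> powr (- sR)"
    unfolding uu using x t by (simp add: powr_minus field_simps)
  moreover have "GG \<xi> \<tau> = \<tau> powr (- sR) * exp (- u)" unfolding GG_def u_def by simp
  ultimately have "GG \<xi> \<tau> = \<xi> powr (- sR) * (u powr sR * exp (- u))" by simp
  also have "\<dots> \<le> \<xi> powr (- sR) * (sR powr sR * exp (- sR))"
    using ue_bound[OF up sR_pos] by (intro mult_left_mono) auto
  also have "\<dots> = (sR / (exp 1 * \<xi>)) powr sR"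
  proof -
    have e: "exp 1 powr sR = exp sR" by (simp add: powr_def)
    have "(sR / (exp 1 * \<xi>)) powr sR = sR powr sR / (exp sR * \<xi> powr sR)"
      using x sR_pos by (simp add: powr_divide powr_mult e)
    then show ?thesis using x by (simp add: powr_minus exp_minus field_simps)
  qed
  finally show ?thesis .
qed

lemma xi0_pos: "C0 * r0\<^sup>2 / 2 > 0" using C0_pos r0pos by simp

lemma ccGG_le1: assumes x: "\<xi> \<ge> C0 * r0\<^sup>2 / 2" and t: "\<tau> > 0" shows "cc * GG \<xi> \<tau> \<le> 1"
proof -
  define x0 where "x0 = C0 * r0\<^sup>2 / 2"
  have x0p: "x0 > 0" unfolding x0_def by (rule xi0_pos)
  have xp: "\<xi> > 0" using x x0p unfolding x0_def by simp
  have "cc * GG \<xi> \<tau> \<le> (exp 1 * x0 / sR) powr sR * (sR / (exp 1 * \<xi>)) powr sR"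
    unfolding cc_def x0_def[symmetric] using GG_upper[OF xp t] by (intro mult_left_mono) auto
  also have "\<dots> = (x0 / \<xi>) powr sR"
    using x0p xp sR_pos by (simp add: powr_mult[symmetric] field_simps)
  also have "\<dots> \<le> 1 powr sR" using x0p xp x sR_pos unfolding x0_def[symmetric] by (intro powr_mono2) auto
  finally show ?thesis by simp
qed

lemma T_eq: "sR * (q * R\<^sup>2 / kappa0) = C0 * R\<^sup>2 / 2"
  unfolding q using sR_pos kappa0_pos by (simp add: field_simps)

lemma ccGG_lower: assumes xp: "\<xi> > 0" and xR: "\<xi> \<le> C0 * R\<^sup>2 / 2" and t: "\<tau> \<ge> q * R\<^sup>2 / kappa0"
  shows "cc * GG \<xi> \<tau> \<ge> ((C0 * r0\<^sup>2 / 2) / (sR * \<tau>)) powr sR"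
proof -
  define x0 where "x0 = C0 * r0\<^sup>2 / 2"
  have x0p: "x0 > 0" unfolding x0_def by (rule xi0_pos)
  have tp: "\<tau> > 0" using t q_pos kappa0_pos R r0pos
    by (smt (verit) divide_pos_pos mult_pos_pos zero_less_power)
  have "\<xi> \<le> sR * \<tau>" using xR T_eq t sR_pos
    by (smt (verit, ccfv_SIG) mult_left_mono)
  then have "\<xi> / \<tau> \<le> sR" using tp by (simp add: divide_le_eq mult.commute)
  then have "exp (- sR) \<le> exp (- \<xi> / \<tau>)" by simp
  then have "\<tau> powr (- sR) * exp (- sR) \<le> GG \<xi> \<tau>" unfolding GG_def by (intro mult_left_mono) auto
  then have "cc * (\<tau> powr (- sR) * exp (- sR)) \<le> cc * GG \<xi> \<tau>" using cc_pos by (intro mult_left_mono) auto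
  moreover have "cc * (\<tau> powr (- sR) * exp (- sR)) = (x0 / (sR * \<tau>)) powr sR"
  proof -
    have e: "exp 1 powr sR = exp sR" by (simp add: powr_def)
    have "cc = exp sR * x0 powr sR / sR powr sR" unfolding cc_def x0_def[symmetric]
      using x0p sR_pos by (simp add: powr_divide powr_mult e)
    moreover have "(x0 / (sR * \<tau>)) powr sR = x0 powr sR / (sR powr sR * \<tau> powr sR)"
      using x0p sR_pos tp by (simp add: powr_divide powr_mult)
    ultimately show ?thesis using tp by (simp add: powr_minus exp_minus field_simps)
  qed
  ultimately show ?thesis unfolding x0_def by simp
qed

lemma lower_eta: assumes ep: "ep \<ge> 0"
  shows "((C0 * r0\<^sup>2 / 2) / (sR * ((q * R\<^sup>2 + ep) / kappa0))) powr sR = eta0 * (q * R\<^sup>2 / (q * R\<^sup>2 + ep)) powr sR"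
proof -
  have Tp: "q * R\<^sup>2 > 0" using q_pos R r0pos by simp
  have "(C0 * r0\<^sup>2 / 2) / (sR * ((q * R\<^sup>2 + ep) / kappa0)) = (r0 / R)\<^sup>2 * (q * R\<^sup>2 / (q * R\<^sup>2 + ep))"
  proof -
    define T where "T = q * R\<^sup>2"
    have e1: "(C0 * r0\<^sup>2 / 2) = (r0 / R)\<^sup>2 * (sR * (T / kappa0))" unfolding T_def T_eq using R r0pos
      by (simp add: field_simps power2_eq_square)
    have TT: "T > 0" "T + ep > 0" using Tp ep unfolding T_def by auto
    have e2: "(sR * (T / kappa0)) / (sR * ((T + ep) / kappa0)) = T / (T + ep)"
    proof -
      have a: "sR * (T / kappa0) = (sR / kappa0) * T" by simp
      have b: "sR * ((T + ep) / kappa0) = (sR / kappa0) * (T + ep)" by simp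
      have c: "sR / kappa0 \<noteq> 0" using kappa0_pos sR_pos by simp
      show ?thesis unfolding a b using mult_divide_mult_cancel_left[OF c] by simp
    qed
    have "(C0 * r0\<^sup>2 / 2) / (sR * ((T + ep) / kappa0)) = (r0 / R)\<^sup>2 * ((sR * (T / kappa0)) / (sR * ((T + ep) / kappa0)))"
      unfolding e1 by (simp only: times_divide_eq_right)
    then show ?thesis unfolding e2 unfolding T_def .
  qed
  moreover have "((r0 / R)\<^sup>2) powr sR = eta0"
  proof -
    have "(r0 / R) powr 2 = (r0 / R)\<^sup>2" using R r0pos by (simp add: powr_numeral)
    moreover have "((r0 / R) powr 2) powr sR = (r0 / R) powr (2 * sR)" by (rule powr_powr)
    ultimately have "((r0 / R)\<^sup>2) powr sR = (r0 / R) powr (2 * sR)" by simp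
    then show ?thesis unfolding eta0 .
  qed
  moreover have "((r0 / R)\<^sup>2 * (q * R\<^sup>2 / (q * R\<^sup>2 + ep))) powr sR = ((r0 / R)\<^sup>2) powr sR * (q * R\<^sup>2 / (q * R\<^sup>2 + ep)) powr sR"
    by (rule powr_mult)
  ultimately show ?thesis by simp
qed

lemma GG_small: assumes x: "\<xi> \<ge> C0 * r0\<^sup>2 / 2" and t: "\<tau> > 0"
  shows "GG \<xi> \<tau> \<le> (2 * sR / (exp 1 * (C0 * r0\<^sup>2 / 2))) powr sR * exp (- (C0 * r0\<^sup>2 / 2) / (2 * \<tau>))"
proof -
  define x0 where "x0 = C0 * r0\<^sup>2 / 2"
  have x0p: "x0 > 0" unfolding x0_def by (rule xi0_pos)
  have xp: "\<xi> > 0" using x x0p unfolding x0_def by simp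
  have ee: "exp (- \<xi> / \<tau>) = exp (- (\<xi> / 2) / \<tau>) * exp (- \<xi> / (2 * \<tau>))"
  proof -
    have "- (\<xi> / 2) / \<tau> + - \<xi> / (2 * \<tau>) = - \<xi> / \<tau>" by (simp add: field_simps)
    then show ?thesis by (simp only: mult_exp_exp)
  qed
  have "GG \<xi> \<tau> = GG (\<xi> / 2) \<tau> * exp (- \<xi> / (2 * \<tau>))"
    unfolding GG_def ee by (simp add: algebra_simps)
  also have "\<dots> \<le> (sR / (exp 1 * (\<xi> / 2))) powr sR * exp (- x0 / (2 * \<tau>))"
  proof (rule mult_mono)
    show "GG (\<xi> / 2) \<tau> \<le> (sR / (exp 1 * (\<xi> / 2))) powr sR" using GG_upper[of "\<xi> / 2" \<tau>] xp t by simp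
    have "x0 \<le> \<xi>" using x unfolding x0_def .
    then have "x0 / (2 * \<tau>) \<le> \<xi> / (2 * \<tau>)" using t by (intro divide_right_mono) auto
    then show "exp (- \<xi> / (2 * \<tau>)) \<le> exp (- x0 / (2 * \<tau>))" by simp
  qed auto
  also have "\<dots> \<le> (2 * sR / (exp 1 * x0)) powr sR * exp (- x0 / (2 * \<tau>))"
  proof (rule mult_right_mono)
    have "sR / (exp 1 * (\<xi> / 2)) \<le> 2 * sR / (exp 1 * x0)"
      using x x0p sR_pos unfolding x0_def by (simp add: field_simps mult_left_mono)
    then show "(sR / (exp 1 * (\<xi> / 2))) powr sR \<le> (2 * sR / (exp 1 * x0)) powr sR"
      using sR_pos xp by (intro powr_mono2) auto
  qed auto
  finally show ?thesis unfolding x0_def .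
qed

lemma closU: "closure U \<subseteq> {y. r0 \<le> norm y \<and> norm y \<le> R}"
proof (rule closure_minimal)
  show "U \<subseteq> {y. r0 \<le> norm y \<and> norm y \<le> R}" using normU' by auto
  show "closed {y::real^'n. r0 \<le> norm y \<and> norm y \<le> R}"
    by (intro closed_Collect_conj closed_Collect_le continuous_intros)
qed

lemma vb_cont: assumes ep: "ep > 0" and T: "T \<ge> 0"
  shows "continuous_on (closure U \<times> {0..T}) (\<lambda>(y,t). vb M del ep y t)"
proof -
  have nimg: "(\<lambda>p. norm (fst p)) ` (closure U \<times> {0..T}) \<subseteq> {r0..R}" using closU by auto
  have cn: "continuous_on (closure U \<times> {0..T}) (\<lambda>p::(real^'n) \<times> real. norm (fst p))" by (intro continuous_intros)
  have cx: "continuous_on (closure U \<times> {0..T}) (\<lambda>p::(real^'n) \<times> real. xi (norm (fst p)))"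
    by (rule continuous_on_compose2[OF xi_cont cn nimg])
  have tp: "\<forall>p\<in>closure U \<times> {0..T}. tau ep (snd p) > 0" using tau_pos ep by auto
  have ct: "continuous_on (closure U \<times> {0..T}) (\<lambda>p::(real^'n) \<times> real. tau ep (snd p))"
    unfolding tau_def using kappa0_pos by (intro continuous_intros) auto
  have "continuous_on (closure U \<times> {0..T}) (\<lambda>p. M + del * (1 + snd p) - M * cc * ((tau ep (snd p)) powr (- sR) * exp (- xi (norm (fst p)) / tau ep (snd p))))"
    using tp by (intro continuous_intros cx ct) (auto simp: less_imp_neq[symmetric])
  then show ?thesis unfolding vb_def GG_def by (simp add: case_prod_unfold)
qed

lemma ep_choice: assumes M: "M \<ge> 0" and e: "e > 0" and del: "del > 0"
  shows "\<exists>ep>0. M * cc * ((2 * sR / (exp 1 * (C0 * r0\<^sup>2 / 2))) powr sR * exp (- (C0 * r0\<^sup>2 / 2) / (2 * (ep / kappa0)))) \<le> del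
     \<and> M * eta0 * (1 - (q * R\<^sup>2 / (q * R\<^sup>2 + ep)) powr sR) \<le> e / 2"
proof -
  define K where "K = (2 * sR / (exp 1 * (C0 * r0\<^sup>2 / 2))) powr sR"
  define a where "a = (C0 * r0\<^sup>2 / 2) * kappa0 / 2"
  define L where "L = M * cc * K + 1"
  define T where "T = q * R\<^sup>2"
  have Tp: "T > 0" unfolding T_def using q_pos R r0pos by simp
  have ap: "a > 0" unfolding a_def using xi0_pos kappa0_pos by simp
  have K0: "K \<ge> 0" unfolding K_def by simp
  have Lp: "L > 0" unfolding L_def using M cc_pos K0 by (simp add: add_nonneg_pos)
  obtain ep1 where ep1p: "ep1 > 0" and ep1: "\<forall>ep>0. ep < ep1 \<longrightarrow> L * exp (- (a / ep)) \<le> del"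
    using exp_small[OF ap Lp del] by blast
  have ev1: "eventually (\<lambda>ep. M * cc * (K * exp (- (C0 * r0\<^sup>2 / 2) / (2 * (ep / kappa0)))) \<le> del) (at_right 0)"
    unfolding eventually_at_right_field
  proof (intro exI[of _ ep1] conjI allI impI ep1p)
    fix ep :: real assume ep: "0 < ep" "ep < ep1"
    have eq: "- (C0 * r0\<^sup>2 / 2) / (2 * (ep / kappa0)) = - (a / ep)" unfolding a_def using kappa0_pos ep by (simp add: field_simps)
    have "M * cc * (K * exp (- (a / ep))) \<le> L * exp (- (a / ep))" unfolding L_def using K0 by (simp add: algebra_simps)
    also have "\<dots> \<le> del" using ep1 ep by blast
    finally show "M * cc * (K * exp (- (C0 * r0\<^sup>2 / 2) / (2 * (ep / kappa0)))) \<le> del" unfolding eq .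
  qed
  have lim: "((\<lambda>ep. (T / (T + ep)) powr sR) \<longlongrightarrow> (T / (T + 0)) powr sR) (at_right 0)"
    using Tp by (intro tendsto_intros) auto
  then have lim1: "((\<lambda>ep. (T / (T + ep)) powr sR) \<longlongrightarrow> 1) (at_right 0)" using Tp by simp
  define c where "c = e / (2 * (M * eta0 + 1))"
  have et: "eta0 \<ge> 0" unfolding eta0 by simp
  have cp: "c > 0" unfolding c_def using e M et by (simp add: add_nonneg_pos)
  have ev2: "eventually (\<lambda>ep. dist ((T / (T + ep)) powr sR) 1 < c) (at_right 0)"
    using lim1 cp by (rule tendstoD)
  have "eventually (\<lambda>ep. ep > 0 \<and> M * cc * (K * exp (- (C0 * r0\<^sup>2 / 2) / (2 * (ep / kappa0)))) \<le> del
          \<and> dist ((T / (T + ep)) powr sR) 1 < c) (at_right 0)"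
    using ev1 ev2 eventually_at_right_less[of 0] by eventually_elim auto
  from eventually_happens'[OF trivial_limit_at_right_real this]
  obtain ep where ep: "ep > 0" "M * cc * (K * exp (- (C0 * r0\<^sup>2 / 2) / (2 * (ep / kappa0)))) \<le> del"
      "dist ((T / (T + ep)) powr sR) 1 < c"
    by blast
  have "M * eta0 * (1 - (T / (T + ep)) powr sR) \<le> M * eta0 * c"
  proof (rule mult_left_mono)
    show "1 - (T / (T + ep)) powr sR \<le> c" using ep(3) by (simp add: dist_real_def abs_less_iff)
    show "0 \<le> M * eta0" using M et by simp
  qed
  also have "\<dots> \<le> e / 2"
  proof -
    have "M * eta0 * c = (M * eta0) / (M * eta0 + 1) * (e / 2)" unfolding c_def by (simp add: field_simps)
    also have "\<dots> \<le> 1 * (e / 2)"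
    proof (rule mult_right_mono)
      have "M * eta0 \<ge> 0" using M et by simp
      then show "(M * eta0) / (M * eta0 + 1) \<le> 1" by (simp add: divide_le_eq)
    qed (use e in simp)
    finally show ?thesis by simp
  qed
  finally have A: "M * eta0 * (1 - (T / (T + ep)) powr sR) \<le> e / 2" .
  show ?thesis using ep(1,2) A unfolding K_def T_def by blast
qed

lemma w_bound:
  fixes w :: "real^'n \<Rightarrow> real \<Rightarrow> real" and M :: real
  assumes wC21: "C21 w U (q * R\<^sup>2)"
    and wc: "continuous_on (closure U \<times> {0..q * R\<^sup>2}) (\<lambda>(x,t). w x t)"
    and Lw: "\<forall>x\<in>U. \<forall>t\<in>{0<..q * R\<^sup>2}. Lop Aop bop (q * R\<^sup>2) w x t \<le> 0"
    and wb: "\<forall>x\<in>frontier U. \<forall>t\<in>{0<..q * R\<^sup>2}. w x t \<le> 0"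
    and M: "M \<ge> 0" and wM: "\<forall>x\<in>closure U. w x 0 \<le> M"
    and x: "x \<in> U"
  shows "w x (q * R\<^sup>2) \<le> M * (1 - eta0)"
proof (rule field_le_epsilon)
  fix e :: real assume e: "e > 0"
  define T where "T = q * R\<^sup>2"
  have Tp: "T > 0" unfolding T_def using q_pos R r0pos by simp
  define del where "del = e / (2 * (1 + T))"
  have delp: "del > 0" unfolding del_def using e Tp by simp
  obtain ep where ep: "ep > 0"
    and ep1: "M * cc * ((2 * sR / (exp 1 * (C0 * r0\<^sup>2 / 2))) powr sR * exp (- (C0 * r0\<^sup>2 / 2) / (2 * (ep / kappa0)))) \<le> del"
    and ep2: "M * eta0 * (1 - (T / (T + ep)) powr sR) \<le> e / 2"
    using ep_choice[OF M e delp] unfolding T_def by blast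
  define v where "v = vb M del ep"
  have cw: "continuous_on (closure U \<times> {0..T}) (\<lambda>(x,t). w x t - v x t)"
  proof -
    have "continuous_on (closure U \<times> {0..T}) (\<lambda>p. (\<lambda>(x,t). w x t) p - (\<lambda>(x,t). v x t) p)"
      using wc vb_cont[OF ep, of T M del] Tp unfolding T_def v_def by (intro continuous_on_diff) auto
    then show ?thesis by (simp add: case_prod_unfold)
  qed
  have init: "\<forall>y\<in>closure U. w y 0 \<le> v y 0"
  proof
    fix y assume y: "y \<in> closure U"
    have ny: "norm y \<in> {r0..R}" using closU y by auto
    have xg: "xi (norm y) \<ge> C0 * r0\<^sup>2 / 2" using xi_ge[OF ny] .
    have tp: "tau ep 0 > 0" using tau_pos ep by simp
    have "M * cc * GG (xi (norm y)) (tau ep 0) \<le> M * cc * ((2 * sR / (exp 1 * (C0 * r0\<^sup>2 / 2))) powr sR * exp (- (C0 * r0\<^sup>2 / 2) / (2 * (ep / kappa0))))"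
      using GG_small[OF xg tp] M cc_pos unfolding tau_def by (intro mult_left_mono) auto
    also have "\<dots> \<le> del" by (rule ep1)
    finally have "M * cc * GG (xi (norm y)) (tau ep 0) \<le> del" .
    then have "v y 0 \<ge> M" unfolding v_def vb_def by simp
    then show "w y 0 \<le> v y 0" using wM y by fastforce
  qed
  have bdry: "\<forall>y\<in>frontier U. \<forall>t\<in>{0<..T}. w y t \<le> v y t"
  proof (intro ballI)
    fix y t assume y: "y \<in> frontier U" and t: "t \<in> {0<..T}"
    have yc: "y \<in> closure U" using y by (simp add: frontier_def)
    have ny: "norm y \<in> {r0..R}" using closU yc by auto
    have tp: "tau ep t > 0" using tau_pos ep t by simp
    have "cc * GG (xi (norm y)) (tau ep t) \<le> 1" using ccGG_le1[OF xi_ge[OF ny] tp] .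
    then have "M * (cc * GG (xi (norm y)) (tau ep t)) \<le> M * 1" using M by (intro mult_left_mono) auto
    moreover have "del * (1 + t) \<ge> 0" using delp t by simp
    ultimately have "v y t \<ge> 0" unfolding v_def vb_def by (simp add: algebra_simps)
    moreover have "w y t \<le> 0" using wb y t unfolding T_def by blast
    ultimately show "w y t \<le> v y t" by simp
  qed
  have C: "\<forall>x\<in>U. \<forall>t\<in>{0<..T}. (\<lambda>y. w y t) differentiable (at x) \<and> (\<lambda>y. gradx w y t) differentiable (at x)
            \<and> (\<lambda>s. w x s) differentiable (at t within {0<..T})"
    using wC21 unfolding C21_def T_def by blast
  have D: "\<forall>x\<in>U. \<forall>t\<in>{0<..T}. (\<lambda>y. v y t) differentiable (at x) \<and> (\<lambda>y. gradx v y t) differentiable (at x)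
            \<and> (\<lambda>s. v x s) differentiable (at t within {0<..T})"
  proof (intro ballI conjI)
    fix y t assume y: "y \<in> U" and t: "t \<in> {0<..T}"
    have tp: "t + ep > 0" using t ep by simp
    show "(\<lambda>y. v y t) differentiable (at y)" unfolding v_def using vb_dy[OF normU[OF y] tp] differentiable_def by blast
    show "(\<lambda>y. gradx v y t) differentiable (at y)" unfolding v_def by (rule gv_diff[OF y tp])
    from vb_dt[OF tp, of M del y] have "\<exists>D. ((\<lambda>t. v y t) has_real_derivative D) (at t)" unfolding v_def by blast
    then show "(\<lambda>s. v y s) differentiable (at t within {0<..T})"
      unfolding real_differentiable_def by (blast intro: has_field_derivative_at_within)
  qed
  have Ac: "\<forall>x\<in>U. continuous (at x) Aop" using Aop_cont Uopen continuous_on_eq_continuous_at by blast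
  have Atr: "\<forall>x\<in>U. \<forall>f. linear f \<longrightarrow> (\<forall>e. e \<bullet> f e \<le> 0) \<longrightarrow> (\<Sum>i\<in>UNIV. (Aop x *v f (axis i 1)) $ i) \<le> 0"
    using Aop_tr normU' by blast
  have Avd: "\<forall>x\<in>U. \<forall>t\<in>{0<..T}. (\<lambda>y. Aop y *v gradx v y t) differentiable (at x)"
  proof (intro ballI)
    fix y t assume y: "y \<in> U" and t: "t \<in> {0<..T}"
    have tp: "t + ep > 0" using t ep by simp
    show "(\<lambda>y. Aop y *v gradx v y t) differentiable (at y)" unfolding v_def using Agv_d[OF y tp] differentiable_def by blast
  qed
  have Lw': "\<forall>x\<in>U. \<forall>t\<in>{0<..T}. Lop Aop bop T w x t \<le> 0" using Lw unfolding T_def .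
  have Lv: "\<forall>x\<in>U. \<forall>t\<in>{0<..T}. Lop Aop bop T v x t > 0"
  proof (intro ballI)
    fix y t assume y: "y \<in> U" and t: "t \<in> {0<..T}"
    show "Lop Aop bop T v y t > 0" unfolding v_def using Lv_pos[OF y t Tp ep M delp] delp by linarith
  qed
  have le: "\<forall>x\<in>closure U. \<forall>t\<in>{0..T}. w x t \<le> v x t"
    by (rule maxprin[OF Uopen Ubdd Tp cw init bdry C D Ac Atr Avd Lw' Lv])
  have "w x T \<le> v x T" using le x Tp closure_subset by fastforce
  also have "\<dots> \<le> M + del * (1 + T) - M * (eta0 * (T / (T + ep)) powr sR)"
  proof -
    have nx: "norm x \<in> {r0..R}" using normU'[OF x] .
    have xp: "xi (norm x) > 0" using xi_ge[OF nx] xi0_pos by linarith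
    have xR: "xi (norm x) \<le> C0 * R\<^sup>2 / 2"
    proof -
      have "xi (norm x) \<le> C0 * (norm x)\<^sup>2 / 2" using xi_le[OF nx] .
      also have "\<dots> \<le> C0 * R\<^sup>2 / 2" using nx C0_pos r0pos by (auto intro!: mult_left_mono power_mono)
      finally show ?thesis .
    qed
    have tt: "tau ep T \<ge> q * R\<^sup>2 / kappa0" unfolding tau_def T_def using ep kappa0_pos by (simp add: divide_right_mono)
    have "cc * GG (xi (norm x)) (tau ep T) \<ge> ((C0 * r0\<^sup>2 / 2) / (sR * tau ep T)) powr sR"
      by (rule ccGG_lower[OF xp xR tt])
    also have "((C0 * r0\<^sup>2 / 2) / (sR * tau ep T)) powr sR = eta0 * (T / (T + ep)) powr sR"
      unfolding tau_def T_def using lower_eta[of ep] ep by simp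
    finally have "cc * GG (xi (norm x)) (tau ep T) \<ge> eta0 * (T / (T + ep)) powr sR" .
    then have "M * (cc * GG (xi (norm x)) (tau ep T)) \<ge> M * (eta0 * (T / (T + ep)) powr sR)"
      using M by (intro mult_left_mono) auto
    then show ?thesis unfolding v_def vb_def by (simp add: algebra_simps)
  qed
  also have "\<dots> \<le> M * (1 - eta0) + e"
  proof -
    have "del * (1 + T) = e / 2" unfolding del_def using Tp by (simp add: field_simps)
    then show ?thesis using ep2 by (simp add: algebra_simps)
  qed
  finally show "w x (q * R\<^sup>2) \<le> M * (1 - eta0) + e" unfolding T_def .
qed

end



theorem lemma4p3:
  fixes a1 al1 a2 al2 :: "nat \<Rightarrow> real" and N1 N2 :: nat
    and f1 f2 pc' :: "real \<Rightarrow> real"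
    and r0 c1 c2 s0 R sl sh :: real
    and Shat :: "real \<Rightarrow> real"
    and U :: "(real^'n) set"
    and w :: "real^'n \<Rightarrow> real \<Rightarrow> real"
    and d0 d1 d2 d3 d4 mu1 mu2 mu3 C0 C1 C2 kappa0 sR q eta0 :: real
  assumes dim: "CARD('n) \<ge> 2"
    and g1: "gpoly_admissible a1 al1 N1" and g2: "gpoly_admissible a2 al2 N2"
    and f1c: "continuous_on {0..1} f1" and f2c: "continuous_on {0..1} f2"
    and f1d: "\<forall>s\<in>{0<..<1}. f1 differentiable (at s)" and f1dc: "continuous_on {0<..<1} (deriv f1)"
    and f2d: "\<forall>s\<in>{0<..<1}. f2 differentiable (at s)" and f2dc: "continuous_on {0<..<1} (deriv f2)"
    and f10: "f1 0 = 0" and f21: "f2 1 = 0"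
    and f1mono: "\<forall>s\<in>{0<..<1}. deriv f1 s > 0" and f2mono: "\<forall>s\<in>{0<..<1}. deriv f2 s < 0"
    and pcd: "\<forall>s\<in>{0<..<1}. pc' differentiable (at s)" and pcdc: "continuous_on {0<..<1} (deriv pc')"
    and pcpos: "\<forall>s\<in>{0<..<1}. pc' s > 0"
    and r0pos: "r0 > 0" and cnz: "c1\<^sup>2 + c2\<^sup>2 > 0" and s0: "0 < s0" "s0 < 1"
    and R: "r0 < R"
    and Sinit: "Shat r0 = s0"
    and Sode: "\<forall>r\<in>{r0..R}. (Shat has_real_derivative
        (Gs (gpoly a2 al2 N2) (c2 * r powr (1 - real CARD('n))) * Ffun pc' f2 (Shat r)
         - Gs (gpoly a1 al1 N1) (c1 * r powr (1 - real CARD('n))) * Ffun pc' f1 (Shat r)))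
        (at r within {r0..R})"
    and Srange: "\<forall>r\<in>{r0..R}. 0 < Shat r \<and> Shat r < 1"
    and Sbounds: "0 < sl" "sh < 1" "\<forall>r\<in>{r0..R}. sl \<le> Shat r \<and> Shat r \<le> sh"
    and Uopen: "open U" and Ubdd: "bounded U" and Usub: "U \<subseteq> ball 0 R - cball 0 r0"
    and d0: "d0 = min (gpoly a1 al1 N1 0) (gpoly a2 al2 N2 0)"
    and d1: "d1 = gpoly a1 al1 N1 (\<bar>c1\<bar> * r0 powr (1 - real CARD('n)))
                + gpoly a2 al2 N2 (\<bar>c2\<bar> * r0 powr (1 - real CARD('n)))"
    and d2: "d2 = gpoly a1 al1 N1 (\<bar>c1\<bar> * r0 powr (1 - real CARD('n))) * (\<bar>c1\<bar> * r0 powr (1 - real CARD('n)))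
                + gpoly a2 al2 N2 (\<bar>c2\<bar> * r0 powr (1 - real CARD('n))) * (\<bar>c2\<bar> * r0 powr (1 - real CARD('n)))"
    and d3: "d3 = (if c1 = 0 then 0 else gpoly_deriv a1 al1 N1 (\<bar>c1\<bar> * r0 powr (1 - real CARD('n))) * (\<bar>c1\<bar> * r0 powr (1 - real CARD('n))))
                + (if c2 = 0 then 0 else gpoly_deriv a2 al2 N2 (\<bar>c2\<bar> * r0 powr (1 - real CARD('n))) * (\<bar>c2\<bar> * r0 powr (1 - real CARD('n))))"
    and d4: "d4 = d1 + d3"
    and mu1: "mu1 = Sup (Ffun pc' f1 ` {sl..sh}) + Sup (Ffun pc' f2 ` {sl..sh})"
    and mu2: "mu2 = Inf (Ffun pc' f1 ` {sl..sh}) + Inf (Ffun pc' f2 ` {sl..sh})"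
    and mu3: "mu3 = Sup ((\<lambda>s. \<bar>deriv (Ffun pc' f1) s\<bar>) ` {sl..sh}) + Sup ((\<lambda>s. \<bar>deriv (Ffun pc' f2) s\<bar>) ` {sl..sh})"
    and C0: "C0 = d4 * mu1" and C1: "C1 = d0 * mu2" and C2: "C2 = d2 * mu3"
    and kappa0: "kappa0 = C0 / (2 * C1)"
    and sR: "sR = kappa0 * (real CARD('n) + C2 * R)"
    and q: "q = kappa0 * C0 / (2 * sR)"
    and eta0: "eta0 = (r0 / R) powr (2 * sR)"
    and wC21: "C21 w U (q * R\<^sup>2)"
    and wcont: "continuous_on (closure (U \<times> {0<..q * R\<^sup>2})) (\<lambda>(x,t). w x t)"
    and Lw: "\<forall>x\<in>U. \<forall>t\<in>{0<..q * R\<^sup>2}.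
        Lop (\<lambda>y. matrix_inv (Ffun pc' f1 (Shat (norm y)) *\<^sub>R Gjac (gpoly a1 al1 N1) (gpoly_deriv a1 al1 N1) (ustar c1 y)
                           + Ffun pc' f2 (Shat (norm y)) *\<^sub>R Gjac (gpoly a2 al2 N2) (gpoly_deriv a2 al2 N2) (ustar c2 y)))
            (\<lambda>y. deriv (Ffun pc' f2) (Shat (norm y)) *\<^sub>R Gvec (gpoly a2 al2 N2) (ustar c2 y)
                 - deriv (Ffun pc' f1) (Shat (norm y)) *\<^sub>R Gvec (gpoly a1 al1 N1) (ustar c1 y))
            (q * R\<^sup>2) w x t \<le> 0"
    and wbdry: "\<forall>x\<in>frontier U. \<forall>t\<in>{0<..<q * R\<^sup>2}. w x t \<le> 0"
  shows "Sup (insert 0 ((\<lambda>x. w x (q * R\<^sup>2)) ` U))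
           \<le> 1 / (1 + eta0) * Sup (insert 0 ((\<lambda>x. w x 0) ` U))"
proof -
  interpret S: fsetup a1 al1 a2 al2 N1 N2 f1 f2 pc' r0 c1 c2 s0 R sl sh Shat U d0 d1 d2 d3 d4 mu1 mu2 mu3 C0 C1 C2 kappa0 sR q eta0
    by (unfold_locales) (fact+)
  define T where "T = q * R\<^sup>2"
  have Tp: "T > 0" unfolding T_def using S.q_pos R r0pos by simp
  have Aeq: "S.Aop = (\<lambda>y. matrix_inv (Ffun pc' f1 (Shat (norm y)) *\<^sub>R Gjac (gpoly a1 al1 N1) (gpoly_deriv a1 al1 N1) (ustar c1 y)
                           + Ffun pc' f2 (Shat (norm y)) *\<^sub>R Gjac (gpoly a2 al2 N2) (gpoly_deriv a2 al2 N2) (ustar c2 y)))"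
    by (rule ext) (simp add: S.Aop_def S.Bop_def)
  have beq: "S.bop = (\<lambda>y. deriv (Ffun pc' f2) (Shat (norm y)) *\<^sub>R Gvec (gpoly a2 al2 N2) (ustar c2 y)
                 - deriv (Ffun pc' f1) (Shat (norm y)) *\<^sub>R Gvec (gpoly a1 al1 N1) (ustar c1 y))"
    by (rule ext) (simp add: S.bop_def)
  have Lw': "\<forall>x\<in>U. \<forall>t\<in>{0<..q * R\<^sup>2}. Lop S.Aop S.bop (q * R\<^sup>2) w x t \<le> 0"
    using Lw unfolding Aeq beq .
  have clos: "closure (U \<times> {0<..q * R\<^sup>2}) = closure U \<times> {0..q * R\<^sup>2}"
    using Tp unfolding T_def by (simp add: closure_Times)
  have wc: "continuous_on (closure U \<times> {0..q * R\<^sup>2}) (\<lambda>(x,t). w x t)" using wcont unfolding clos .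
  have wc0: "continuous_on (closure U) (\<lambda>x. w x 0)"
  proof -
    have "continuous_on (closure U) (\<lambda>x. (\<lambda>(x,t). w x t) (x, 0))"
      using Tp unfolding T_def
      by (intro continuous_on_compose2[OF wc]) (auto intro!: continuous_intros)
    then show ?thesis by simp
  qed
  have wcT: "continuous_on (closure U) (\<lambda>x. w x (q * R\<^sup>2))"
  proof -
    have "continuous_on (closure U) (\<lambda>x. (\<lambda>(x,t). w x t) (x, q * R\<^sup>2))"
      using Tp unfolding T_def
      by (intro continuous_on_compose2[OF wc]) (auto intro!: continuous_intros)
    then show ?thesis by simp
  qed
  have cU: "compact (closure U)" using Ubdd by (simp add: compact_closure)
  have bd0: "bdd_above ((\<lambda>x. w x 0) ` U)"
  proof -
    have "bounded ((\<lambda>x. w x 0) ` closure U)" using compact_continuous_image[OF wc0 cU] by (rule compact_imp_bounded)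
    then have "bounded ((\<lambda>x. w x 0) ` U)" by (rule bounded_subset) (use closure_subset in auto)
    then show ?thesis by (rule bounded_imp_bdd_above)
  qed
  define M where "M = Sup (insert 0 ((\<lambda>x. w x 0) ` U))"
  have M0: "M \<ge> 0" unfolding M_def using bd0 by (intro cSup_upper) auto
  have wMU: "\<forall>x\<in>U. w x 0 \<le> M" unfolding M_def using bd0 by (auto intro!: cSup_upper)
  have wM: "\<forall>x\<in>closure U. w x 0 \<le> M"
    using continuous_le_on_closure[OF wc0 _ wMU[rule_format]] by blast
  have wb: "\<forall>x\<in>frontier U. \<forall>t\<in>{0<..q * R\<^sup>2}. w x t \<le> 0"
  proof (intro ballI)
    fix x t assume x: "x \<in> frontier U" and t: "t \<in> {0<..q * R\<^sup>2}"
    have xc: "x \<in> closure U" using x by (simp add: frontier_def)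
    have ct: "continuous_on {0..q * R\<^sup>2} (\<lambda>t. w x t)"
    proof -
      have "continuous_on {0..q * R\<^sup>2} (\<lambda>t. (\<lambda>(x,t). w x t) (x, t))"
        using xc by (intro continuous_on_compose2[OF wc]) (auto intro!: continuous_intros)
      then show ?thesis by simp
    qed
    have cl: "closure {0<..<q * R\<^sup>2} = {0..q * R\<^sup>2}" using Tp unfolding T_def by simp
    have "t \<in> closure {0<..<q * R\<^sup>2}" using t unfolding cl by auto
    moreover have "\<And>s. s \<in> {0<..<q * R\<^sup>2} \<Longrightarrow> w x s \<le> 0" using wbdry x by blast
    ultimately show "w x t \<le> 0" using continuous_le_on_closure[of "{0<..<q * R\<^sup>2}" "\<lambda>t. w x t" t 0] ct cl by simp
  qed
  have main: "\<forall>x\<in>U. w x (q * R\<^sup>2) \<le> M * (1 - eta0)"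
    using S.w_bound[OF wC21 wc Lw' wb M0 wM] by blast
  have et: "eta0 \<ge> 0" unfolding eta0 by simp
  have le: "M * (1 - eta0) \<le> 1 / (1 + eta0) * M"
  proof -
    have "(1 - eta0) * (1 + eta0) \<le> 1" by (simp add: algebra_simps)
    then have "1 - eta0 \<le> 1 / (1 + eta0)" using et by (simp add: field_simps)
    then have "M * (1 - eta0) \<le> M * (1 / (1 + eta0))" using M0 by (rule mult_left_mono)
    then show ?thesis by simp
  qed
  show ?thesis
    unfolding M_def[symmetric]
  proof (rule cSup_least)
    show "insert 0 ((\<lambda>x. w x (q * R\<^sup>2)) ` U) \<noteq> {}" by simp
    fix y assume "y \<in> insert 0 ((\<lambda>x. w x (q * R\<^sup>2)) ` U)"
    then show "y \<le> 1 / (1 + eta0) * M"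
    proof
      assume "y = 0" then show ?thesis using M0 et by simp
    next
      assume "y \<in> (\<lambda>x. w x (q * R\<^sup>2)) ` U"
      then obtain x where "x \<in> U" "y = w x (q * R\<^sup>2)" by blast
      then show ?thesis using main le by fastforce
    qed
  qed
qed


end
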